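(* Let $G$ be an infinite, connected, vertex-transitive, smallish graph in which every vertex has degree $k$, with a unit resistor on each edge. Then for every vertex $v$ of $G$, $$\sum_{\{x,y\}:\ x,y\sim v} R_{xy} = k,$$ where the sum runs over unordered pairs $\{x,y\}$ of neighbours of $v$ (pairs with $x=y$ contribute $R_{xx}=0$).
   Context: $x\sim y$ means $x$ and $y$ are adjacent. $R_{xy}$ denotes the effective electrical resistance between $x,y$ with unit resistance on every edge. Vertex transitive: for any two vertices there is a graph automorphism mapping one to the other. Smallish: $G$ has bounded degree and there are finite subgraphs $G_m\subseteq G_{m+1}$ with $\bigcup_m G_m=G$ and $|\mathrm{boundary}(G_m)|/|G_m|\to0$ (number of boundary vertices of $G_m$, i.e. those adjacent to vertices outside $G_m$, over number of vertices of $G_m$). *)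

theory Defs
  imports "HOL-Analysis.Analysis"
begin

text \<open>Graphs: vertex set = the whole type 'a, adjacency relation adj (symmetric, irreflexive).\<close>

definition simple_graph :: "('a \<Rightarrow> 'a \<Rightarrow> bool) \<Rightarrow> bool" where
  "simple_graph adj \<longleftrightarrow> (\<forall>x y. adj x y \<longrightarrow> adj y x) \<and> (\<forall>x. \<not> adj x x)"

definition nbhd :: "('a \<Rightarrow> 'a \<Rightarrow> bool) \<Rightarrow> 'a \<Rightarrow> 'a set" where
  "nbhd adj v = {w. adj v w}"

definition connected_graph :: "('a \<Rightarrow> 'a \<Rightarrow> bool) \<Rightarrow> bool" where
  "connected_graph adj \<longleftrightarrow> (\<forall>x y. adj\<^sup>*\<^sup>* x y)"

definition vertex_transitive :: "('a \<Rightarrow> 'a \<Rightarrow> bool) \<Rightarrow> bool" where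
  "vertex_transitive adj \<longleftrightarrow>
     (\<forall>x y. \<exists>\<sigma>. bij \<sigma> \<and> (\<forall>u w. adj u w \<longleftrightarrow> adj (\<sigma> u) (\<sigma> w)) \<and> \<sigma> x = y)"

definition regular_graph :: "('a \<Rightarrow> 'a \<Rightarrow> bool) \<Rightarrow> nat \<Rightarrow> bool" where
  "regular_graph adj k \<longleftrightarrow> (\<forall>v. finite (nbhd adj v) \<and> card (nbhd adj v) = k)"

definition bounded_degree :: "('a \<Rightarrow> 'a \<Rightarrow> bool) \<Rightarrow> bool" where
  "bounded_degree adj \<longleftrightarrow> (\<exists>D::nat. \<forall>v. finite (nbhd adj v) \<and> card (nbhd adj v) \<le> D)"

definition boundary :: "('a \<Rightarrow> 'a \<Rightarrow> bool) \<Rightarrow> 'a set \<Rightarrow> 'a set" where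
  "boundary adj S = {x \<in> S. \<exists>y. adj x y \<and> y \<notin> S}"

definition smallish :: "('a \<Rightarrow> 'a \<Rightarrow> bool) \<Rightarrow> bool" where
  "smallish adj \<longleftrightarrow> bounded_degree adj \<and>
     (\<exists>G :: nat \<Rightarrow> 'a set. (\<forall>m. finite (G m) \<and> G m \<subseteq> G (Suc m)) \<and> (\<Union>m. G m) = UNIV \<and>
        (\<lambda>m. real (card (boundary adj (G m))) / real (card (G m))) \<longlonglongrightarrow> 0)"

text \<open>Dirichlet energy with unit resistances (each unordered edge counted once,
  hence the factor 1/2 over ordered adjacent pairs).\<close>
definition dir_energy :: "('a \<Rightarrow> 'a \<Rightarrow> bool) \<Rightarrow> ('a \<Rightarrow> real) \<Rightarrow> real" where
  "dir_energy adj f = (\<Sum>\<^sub>\<infinity>(u,w)\<in>{(u,w). adj u w}. (f u - f w)\<^sup>2) / 2"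

definition finite_energy :: "('a \<Rightarrow> 'a \<Rightarrow> bool) \<Rightarrow> ('a \<Rightarrow> real) \<Rightarrow> bool" where
  "finite_energy adj f \<longleftrightarrow> (\<lambda>(u,w). (f u - f w)\<^sup>2) summable_on {(u,w). adj u w}"

text \<open>For finite connected graphs this is the usual effective resistance; for infinite graphs
  it is the free effective resistance (= limit of resistances along finite exhaustions).\<close>
definition eff_resistance :: "('a \<Rightarrow> 'a \<Rightarrow> bool) \<Rightarrow> 'a \<Rightarrow> 'a \<Rightarrow> real" where
  "eff_resistance adj x y =
     Sup {(f x - f y)\<^sup>2 | f. finite_energy adj f \<and> dir_energy adj f \<le> 1}"

end

theory Submission
  imports Defs
begin


definition Lap :: "'a set \<Rightarrow> ('a \<Rightarrow> 'a \<Rightarrow> real) \<Rightarrow> ('a \<Rightarrow> real) \<Rightarrow> 'a \<Rightarrow> real" where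
  "Lap V c u x = (\<Sum>y\<in>V. c x y * (u x - u y))"

definition Bf :: "'a set \<Rightarrow> ('a \<Rightarrow> 'a \<Rightarrow> real) \<Rightarrow> ('a \<Rightarrow> real) \<Rightarrow> ('a \<Rightarrow> real) \<Rightarrow> real" where
  "Bf V c f g = (\<Sum>x\<in>V. \<Sum>y\<in>V. c x y * ((f x - f y) * (g x - g y))) / 2"

definition Rfin :: "'a set \<Rightarrow> ('a \<Rightarrow> 'a \<Rightarrow> real) \<Rightarrow> 'a \<Rightarrow> 'a \<Rightarrow> real" where
  "Rfin V c x y = Sup {(f x - f y)\<^sup>2 | f. Bf V c f f \<le> 1}"

definition wg :: "'a set \<Rightarrow> ('a \<Rightarrow> 'a \<Rightarrow> real) \<Rightarrow> bool" where
  "wg V c \<longleftrightarrow> finite V \<and> (\<forall>x\<in>V. \<forall>y\<in>V. c x y = c y x \<and> c x y \<ge> 0) \<and>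
     (\<forall>S. S \<subseteq> V \<and> S \<noteq> {} \<and> S \<noteq> V \<longrightarrow> (\<exists>x\<in>S. \<exists>y\<in>V-S. c x y > 0))"

lemma Bf_Lap:
  assumes "\<forall>x\<in>V. \<forall>y\<in>V. c x y = c y x"
  shows "Bf V c f g = (\<Sum>z\<in>V. f z * Lap V c g z)"
proof -
  have A: "(\<Sum>x\<in>V. f x * Lap V c g x) = (\<Sum>x\<in>V. \<Sum>y\<in>V. c x y * (f x * (g x - g y)))"
    unfolding Lap_def by (simp add: sum_distrib_left algebra_simps)
  have "(\<Sum>x\<in>V. \<Sum>y\<in>V. c x y * (f x * (g x - g y))) = (\<Sum>y\<in>V. \<Sum>x\<in>V. c x y * (f x * (g x - g y)))"
    by (rule sum.swap)
  also have "\<dots> = (\<Sum>x\<in>V. \<Sum>y\<in>V. c x y * (- f y * (g x - g y)))"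
    apply (rule sum.cong, simp)+
    using assms by (simp add: algebra_simps)
  finally have B: "(\<Sum>x\<in>V. \<Sum>y\<in>V. c x y * (f x * (g x - g y))) = (\<Sum>x\<in>V. \<Sum>y\<in>V. c x y * (- f y * (g x - g y)))" .
  have "2 * (\<Sum>x\<in>V. f x * Lap V c g x) = (\<Sum>x\<in>V. \<Sum>y\<in>V. c x y * (f x * (g x - g y))) + (\<Sum>x\<in>V. \<Sum>y\<in>V. c x y * (- f y * (g x - g y)))"
    using A B by simp
  also have "\<dots> = (\<Sum>x\<in>V. \<Sum>y\<in>V. c x y * ((f x - f y) * (g x - g y)))"
    by (simp add: sum.distrib[symmetric] algebra_simps)
  finally show ?thesis unfolding Bf_def by simp
qed

lemma Bf_sym: "Bf V c f g = Bf V c g f"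
  unfolding Bf_def by (simp add: mult.commute mult.left_commute)

lemma Bf_nonneg: "\<forall>x\<in>V. \<forall>y\<in>V. c x y \<ge> 0 \<Longrightarrow> Bf V c f f \<ge> 0"
  unfolding Bf_def by (auto intro!: sum_nonneg divide_nonneg_pos)

lemma Bf_expand:
  "Bf V c (\<lambda>z. f z + t * g z) (\<lambda>z. f z + t * g z) = Bf V c f f + 2 * t * Bf V c f g + t\<^sup>2 * Bf V c g g"
proof -
  have "\<And>x y. c x y * (((f x + t * g x) - (f y + t * g y)) * ((f x + t * g x) - (f y + t * g y)))
     = c x y * ((f x - f y) * (f x - f y)) + 2 * t * (c x y * ((f x - f y) * (g x - g y))) + t\<^sup>2 * (c x y * ((g x - g y) * (g x - g y)))"
    by (simp add: algebra_simps power2_eq_square)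
  then show ?thesis unfolding Bf_def
    by (simp add: sum.distrib sum_distrib_left add_divide_distrib)
qed

lemma Bf_scale: "Bf V c (\<lambda>z. a * f z) (\<lambda>z. a * f z) = a\<^sup>2 * Bf V c f f"
proof -
  have "\<And>x y. c x y * ((a * f x - a * f y) * (a * f x - a * f y)) = a\<^sup>2 * (c x y * ((f x - f y) * (f x - f y)))"
    by (simp add: algebra_simps power2_eq_square)
  then show ?thesis unfolding Bf_def by (simp add: sum_distrib_left algebra_simps power2_eq_square)
qed

lemma Bf_diff:
  "Bf V c (\<lambda>z. f z - g z) (\<lambda>z. f z - g z) = Bf V c f f + Bf V c g g - 2 * Bf V c f g"
  using Bf_expand[of V c f "-1" g] by (simp add: algebra_simps)

lemma quad_CS:
  fixes P Q R :: real
  assumes "\<And>t. P + 2 * t * Q + t\<^sup>2 * R \<ge> 0" and R0: "R \<ge> 0"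
  shows "Q\<^sup>2 \<le> P * R"
proof (cases "R = 0")
  case True
  show ?thesis
  proof (rule ccontr)
    assume "\<not> ?thesis"
    then have "Q \<noteq> 0" using True by simp
    have "P + 2 * (-(P+1)/(2*Q)) * Q + (-(P+1)/(2*Q))\<^sup>2 * R \<ge> 0" by (rule assms)
    with True \<open>Q \<noteq> 0\<close> show False by (simp add: field_simps)
  qed
next
  case False
  have "P + 2 * (-Q/R) * Q + (-Q/R)\<^sup>2 * R \<ge> 0" by (rule assms)
  then have "P - Q\<^sup>2 / R \<ge> 0" using False by (simp add: field_simps power2_eq_square)
  then have "Q\<^sup>2 / R \<le> P" by simp
  then show ?thesis using False R0 by (simp add: field_simps mult.commute)
qed



lemma Bf_CS:
  assumes "\<forall>x\<in>V. \<forall>y\<in>V. c x y \<ge> 0"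
  shows "(Bf V c f g)\<^sup>2 \<le> Bf V c f f * Bf V c g g"
  apply (rule quad_CS)
  using Bf_expand[of V c f _ g, symmetric] Bf_nonneg[OF assms] by auto

lemma Lap_diff: "Lap V c (\<lambda>z. f z - g z) x = Lap V c f x - Lap V c g x"
  unfolding Lap_def by (simp add: sum_subtractf[symmetric] algebra_simps)

lemma Lap_sum: "Lap V c (\<lambda>z. \<Sum>a\<in>A. h a z) x = (\<Sum>a\<in>A. Lap V c (h a) x)"
  unfolding Lap_def
  by (simp add: sum_subtractf[symmetric] sum_distrib_left sum.swap[of _ A V])

lemma wg_finite: "wg V c \<Longrightarrow> finite V" unfolding wg_def by auto
lemma wg_sym: "wg V c \<Longrightarrow> x\<in>V \<Longrightarrow> y\<in>V \<Longrightarrow> c x y = c y x" unfolding wg_def by auto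
lemma wg_nonneg: "wg V c \<Longrightarrow> x\<in>V \<Longrightarrow> y\<in>V \<Longrightarrow> c x y \<ge> 0" unfolding wg_def by auto
lemma wg_cut: "wg V c \<Longrightarrow> S \<subseteq> V \<Longrightarrow> S \<noteq> {} \<Longrightarrow> S \<noteq> V \<Longrightarrow> \<exists>x\<in>S. \<exists>y\<in>V-S. c x y > 0"
  unfolding wg_def by auto

lemma kron_wg:
  assumes wg: "wg V c" and w: "w \<in> V" and ne: "V - {w} \<noteq> {}"
    and d: "d = (\<Sum>y\<in>V-{w}. c w y)" and dpos: "d > 0"
  shows "wg (V - {w}) (\<lambda>x y. c x y + c x w * c w y / d)"
proof -
  let ?V = "V - {w}"
  let ?c = "\<lambda>x y. c x y + c x w * c w y / d"
  have fin: "finite ?V" using wg_finite[OF wg] by simp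
  have sym: "\<forall>x\<in>?V. \<forall>y\<in>?V. ?c x y = ?c y x \<and> ?c x y \<ge> 0"
    using wg_sym[OF wg] wg_nonneg[OF wg] w dpos by (auto intro!: add_nonneg_nonneg divide_nonneg_pos mult_nonneg_nonneg)
  have ge: "\<And>x y. x \<in> V \<Longrightarrow> y \<in> V \<Longrightarrow> ?c x y \<ge> c x y"
    using wg_nonneg[OF wg] w dpos by (auto intro!: divide_nonneg_pos mult_nonneg_nonneg)
  have cut: "\<exists>x\<in>S. \<exists>y\<in>?V-S. ?c x y > 0" if S: "S \<subseteq> ?V" "S \<noteq> {}" "S \<noteq> ?V" for S
  proof -
    from wg_cut[OF wg, of S] S obtain x y where xy: "x \<in> S" "y \<in> V - S" "c x y > 0" by auto
    show ?thesis
    proof (cases "y = w")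
      case False
      then show ?thesis using xy ge[of x y] S by (intro bexI[of _ x] bexI[of _ y]) auto
    next
      case True
      have "insert w S \<noteq> V" using S by auto
      from wg_cut[OF wg, of "insert w S"] this S w obtain x' y' where
        x'y': "x' \<in> insert w S" "y' \<in> V - insert w S" "c x' y' > 0" by auto
      show ?thesis
      proof (cases "x' = w")
        case False
        then show ?thesis using x'y' ge[of x' y'] S by (intro bexI[of _ x'] bexI[of _ y']) auto
      next
        case True
        have "c x w * c w y' / d > 0" using xy x'y' \<open>y = w\<close> True dpos by auto
        moreover have "c x y' \<ge> 0" using wg_nonneg[OF wg] xy x'y' S by auto
        ultimately show ?thesis using xy x'y' by (intro bexI[of _ x] bexI[of _ y']) auto
      qed
    qed
  qed
  show ?thesis unfolding wg_def using fin sym cut by blast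
qed

lemma exists_sol_aux:
  "card V = n \<Longrightarrow> wg V c \<Longrightarrow> V \<noteq> {} \<Longrightarrow> (\<Sum>x\<in>V. b x) = 0 \<Longrightarrow> \<exists>u. \<forall>x\<in>V. Lap V c u x = b x"
proof (induction n arbitrary: V c b)
  case 0
  then have "finite V" using wg_finite by blast
  then show ?case using 0 by simp
next
  case (Suc n)
  note wg = Suc.prems(2)
  have fin: "finite V" using wg_finite[OF wg] .
  obtain w where w: "w \<in> V" using Suc.prems by auto
  show ?case
  proof (cases "V - {w} = {}")
    case True
    then have V: "V = {w}" using w by auto
    then have "b w = 0" using Suc.prems by simp
    then show ?thesis using V by (auto simp: Lap_def)
  next
    case False
    let ?V = "V - {w}"
    define d where "d = (\<Sum>y\<in>?V. c w y)"
    have "{w} \<noteq> V" using False by auto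
    from wg_cut[OF wg, of "{w}"] this w obtain y where y: "y \<in> ?V" "c w y > 0" by auto
    have dpos: "d > 0" unfolding d_def
    proof -
      have "(\<Sum>y\<in>?V. c w y) \<ge> c w y" 
        using y fin wg_nonneg[OF wg] w by (intro member_le_sum) auto
      then show "(\<Sum>y\<in>?V. c w y) > 0" using y by linarith
    qed
    define c' where "c' = (\<lambda>x y. c x y + c x w * c w y / d)"
    define b' where "b' = (\<lambda>x. b x + c x w * b w / d)"
    have wg': "wg ?V c'" unfolding c'_def by (rule kron_wg[OF wg w False d_def dpos])
    have cV: "card ?V = n" using Suc.prems w fin by simp
    have "(\<Sum>x\<in>?V. b' x) = (\<Sum>x\<in>?V. b x) + (\<Sum>x\<in>?V. c x w) * b w / d"
      unfolding b'_def by (simp add: sum.distrib sum_divide_distrib[symmetric] sum_distrib_right)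
    also have "(\<Sum>x\<in>?V. c x w) = d" unfolding d_def
      using wg_sym[OF wg] w by (intro sum.cong) auto
    also have "(\<Sum>x\<in>?V. b x) + d * b w / d = (\<Sum>x\<in>V. b x)"
      using dpos fin w by (simp add: sum.remove[of V w])
    finally have sb': "(\<Sum>x\<in>?V. b' x) = 0" using Suc.prems by simp
    from Suc.IH[OF cV wg' False sb'] obtain u' where u': "\<forall>x\<in>?V. Lap ?V c' u' x = b' x" by blast
    define uw where "uw = (b w + (\<Sum>y\<in>?V. c w y * u' y)) / d"
    define u where "u = u'(w := uw)"
    have atw: "Lap V c u w = b w"
    proof -
      have "Lap V c u w = (\<Sum>y\<in>?V. c w y * (uw - u' y))"
        unfolding Lap_def u_def using fin w by (simp add: sum.remove[of V w])
      also have "\<dots> = d * uw - (\<Sum>y\<in>?V. c w y * u' y)"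
        unfolding d_def by (simp add: algebra_simps sum_subtractf sum_distrib_right sum_distrib_left)
      also have "\<dots> = b w" unfolding uw_def using dpos by simp
      finally show ?thesis .
    qed
    have atx: "Lap V c u x = b x" if x: "x \<in> ?V" for x
    proof -
      have ux: "u x = u' x" using x unfolding u_def by simp
      have "Lap V c u x = (\<Sum>y\<in>?V. c x y * (u' x - u' y)) + c x w * (u' x - uw)"
        unfolding Lap_def u_def using fin w x by (simp add: sum.remove[of V w])
      also have "u' x - uw = ((\<Sum>y\<in>?V. c w y * (u' x - u' y)) - b w) / d"
      proof -
        have "(\<Sum>y\<in>?V. c w y * (u' x - u' y)) = d * u' x - (\<Sum>y\<in>?V. c w y * u' y)"
          unfolding d_def by (simp add: algebra_simps sum_subtractf sum_distrib_right sum_distrib_left)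
        then show ?thesis unfolding uw_def using dpos by (simp add: field_simps)
      qed
      also have "(\<Sum>y\<in>?V. c x y * (u' x - u' y)) + c x w * (((\<Sum>y\<in>?V. c w y * (u' x - u' y)) - b w) / d)
          = Lap ?V c' u' x - c x w * b w / d"
      proof -
        have e1: "Lap ?V c' u' x = (\<Sum>y\<in>?V. c x y * (u' x - u' y)) + (\<Sum>y\<in>?V. (c x w * c w y / d) * (u' x - u' y))"
          unfolding Lap_def c'_def by (simp add: sum.distrib[symmetric] algebra_simps)
        have e2: "c x w * (((\<Sum>y\<in>?V. c w y * (u' x - u' y)) - b w) / d) = (\<Sum>y\<in>?V. (c x w * c w y / d) * (u' x - u' y)) - c x w * b w / d"
          by (simp add: sum_distrib_left diff_divide_distrib sum_divide_distrib algebra_simps)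
        show ?thesis using e1 e2 by simp
      qed
      also have "\<dots> = b x" using u' x unfolding b'_def by simp
      finally show ?thesis .
    qed
    show ?thesis using atw atx by (intro exI[of _ u]) auto
  qed
qed

lemma exists_sol:
  "wg V c \<Longrightarrow> V \<noteq> {} \<Longrightarrow> (\<Sum>x\<in>V. b x) = 0 \<Longrightarrow> \<exists>u. \<forall>x\<in>V. Lap V c u x = b x"
  using exists_sol_aux by blast



definition dlt :: "'a \<Rightarrow> 'a \<Rightarrow> real" where "dlt a z = (if z = a then 1 else 0)"

lemma sum_dlt: "finite V \<Longrightarrow> (\<Sum>z\<in>V. f z * dlt a z) = (if a \<in> V then f a else 0)"
  unfolding dlt_def by (simp add: if_distrib cong: if_cong)

lemma Rfin_sol:
  assumes wg: "wg V c" and x: "x \<in> V" and y: "y \<in> V"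
    and u: "\<forall>z\<in>V. Lap V c u z = dlt x z - dlt y z"
  shows "Rfin V c x y = u x - u y" and "Bf V c u u = u x - u y" and "u x - u y \<ge> 0"
    and "\<And>f. (f x - f y)\<^sup>2 \<le> Bf V c f f * (u x - u y)"
    and "\<exists>f. Bf V c f f \<le> 1 \<and> (f x - f y)\<^sup>2 = u x - u y"
proof -
  have fin: "finite V" using wg_finite[OF wg] .
  have sym: "\<forall>x\<in>V. \<forall>y\<in>V. c x y = c y x" using wg_sym[OF wg] by blast
  have nn: "\<forall>x\<in>V. \<forall>y\<in>V. c x y \<ge> 0" using wg_nonneg[OF wg] by blast
  have key: "Bf V c f u = f x - f y" for f
  proof -
    have "Bf V c f u = (\<Sum>z\<in>V. f z * (dlt x z - dlt y z))"
      unfolding Bf_Lap[OF sym] using u by (intro sum.cong) auto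
    also have "\<dots> = f x - f y" using fin x y
      by (simp add: right_diff_distrib sum_subtractf sum_dlt)
    finally show ?thesis .
  qed
  show B: "Bf V c u u = u x - u y" by (rule key)
  show r0: "u x - u y \<ge> 0" using Bf_nonneg[OF nn, of u] B by simp
  show le: "(f x - f y)\<^sup>2 \<le> Bf V c f f * (u x - u y)" for f
    using Bf_CS[OF nn, of f u] key[of f] B by simp
  show att: "\<exists>f. Bf V c f f \<le> 1 \<and> (f x - f y)\<^sup>2 = u x - u y"
  proof (cases "u x - u y = 0")
    case True
    then show ?thesis by (intro exI[of _ "\<lambda>z. 0"]) (simp add: Bf_def)
  next
    case False
    let ?r = "u x - u y"
    have rp: "?r > 0" using False r0 by simp
    let ?f = "\<lambda>z. (1 / sqrt ?r) * u z"
    have "Bf V c ?f ?f = (1 / sqrt ?r)\<^sup>2 * ?r" using Bf_scale[of V c "1 / sqrt ?r" u] B by simp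
    also have "\<dots> = 1" using rp by (simp add: power_divide)
    finally have e1: "Bf V c ?f ?f = 1" .
    have "?f x - ?f y = ?r / sqrt ?r" by (simp add: diff_divide_distrib)
    then have "(?f x - ?f y)\<^sup>2 = ?r\<^sup>2 / ?r" using rp by (simp add: power_divide)
    also have "\<dots> = ?r" using rp by (simp add: power2_eq_square)
    finally show ?thesis using e1 by (intro exI[of _ ?f]) simp
  qed
  show "Rfin V c x y = u x - u y"
    unfolding Rfin_def
  proof (rule cSup_eq_maximum)
    show "u x - u y \<in> {(f x - f y)\<^sup>2 |f. Bf V c f f \<le> 1}" using att by (metis (mono_tags, lifting) mem_Collect_eq)
    show "z \<le> u x - u y" if "z \<in> {(f x - f y)\<^sup>2 |f. Bf V c f f \<le> 1}" for z
    proof -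
      from that obtain f where f: "z = (f x - f y)\<^sup>2" "Bf V c f f \<le> 1" by auto
      have "z \<le> Bf V c f f * (u x - u y)" using le f by simp
      also have "\<dots> \<le> 1 * (u x - u y)" using f r0 by (intro mult_right_mono) auto
      finally show ?thesis by simp
    qed
  qed
qed

lemma sol_exists_dlt:
  assumes wg: "wg V c" and x: "x \<in> V" and y: "y \<in> V"
  shows "\<exists>u. \<forall>z\<in>V. Lap V c u z = dlt x z - dlt y z"
proof -
  have fin: "finite V" using wg_finite[OF wg] .
  have "(\<Sum>z\<in>V. dlt x z - dlt y z) = 0"
    using sum_dlt[OF fin, of "\<lambda>_. 1"] x y by (simp add: sum_subtractf)
  then show ?thesis using exists_sol[OF wg] x by blast
qed

lemma Rfin_props:
  assumes wg: "wg V c" and x: "x \<in> V" and y: "y \<in> V"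
  shows "Rfin V c x y \<ge> 0" and "\<And>f. (f x - f y)\<^sup>2 \<le> Bf V c f f * Rfin V c x y"
    and "\<exists>f. Bf V c f f \<le> 1 \<and> (f x - f y)\<^sup>2 = Rfin V c x y"
  using Rfin_sol[OF wg x y] sol_exists_dlt[OF wg x y] by metis+

lemma Rfin_sym: "Rfin V c x y = Rfin V c y x"
  unfolding Rfin_def by (simp add: power2_commute)

lemma Rfin_le2:
  assumes wg: "wg V c" and x: "x \<in> V" and y: "y \<in> V" and cxy: "c x y \<ge> 1"
  shows "Rfin V c x y \<le> 2"
proof -
  obtain f where f: "Bf V c f f \<le> 1" "(f x - f y)\<^sup>2 = Rfin V c x y" using Rfin_props(3)[OF wg x y] by blast
  have fin: "finite V" using wg_finite[OF wg] .
  let ?t = "\<lambda>a b. c a b * ((f a - f b) * (f a - f b))"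
  have tnn: "\<And>a b. a\<in>V \<Longrightarrow> b\<in>V \<Longrightarrow> ?t a b \<ge> 0" using wg_nonneg[OF wg] by auto
  have "?t x y \<le> (\<Sum>b\<in>V. ?t x b)" using fin y tnn x by (intro member_le_sum) auto
  also have "\<dots> \<le> (\<Sum>a\<in>V. \<Sum>b\<in>V. ?t a b)" using fin x tnn by (intro member_le_sum[of x V "\<lambda>a. \<Sum>b\<in>V. ?t a b"] sum_nonneg) auto
  finally have "?t x y \<le> 2 * Bf V c f f" unfolding Bf_def by simp
  then have "c x y * (f x - f y)\<^sup>2 \<le> 2" using f by (simp add: power2_eq_square)
  moreover have "(f x - f y)\<^sup>2 \<le> c x y * (f x - f y)\<^sup>2" using cxy
    by (metis mult_le_cancel_right1 zero_le_power2 not_le order_less_le_trans)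
  ultimately show ?thesis using f by simp
qed



lemma foster:
  assumes wg: "wg V c" and ne: "V \<noteq> {}"
  shows "(\<Sum>x\<in>V. \<Sum>y\<in>V. c x y * Rfin V c x y) = 2 * (real (card V) - 1)"
proof -
  have fin: "finite V" using wg_finite[OF wg] .
  let ?n = "real (card V)"
  have npos: "?n > 0" using fin ne by (simp add: card_gt_0_iff)
  have "\<forall>a\<in>V. \<exists>g. \<forall>z\<in>V. Lap V c g z = dlt a z - 1 / ?n"
  proof
    fix a assume a: "a \<in> V"
    have "(\<Sum>z\<in>V. dlt a z - 1 / ?n) = 0"
      using sum_dlt[OF fin, of "\<lambda>_. 1"] a npos by (simp add: sum_subtractf)
    then show "\<exists>g. \<forall>z\<in>V. Lap V c g z = dlt a z - 1 / ?n" using exists_sol[OF wg ne] by blast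
  qed
  then obtain G where G: "\<forall>a\<in>V. \<forall>z\<in>V. Lap V c (G a) z = dlt a z - 1 / ?n" by metis
  have R: "Rfin V c x y = (G x x - G x y) + (G y y - G y x)" if x: "x \<in> V" and y: "y \<in> V" for x y
  proof -
    have "\<forall>z\<in>V. Lap V c (\<lambda>z. G x z - G y z) z = dlt x z - dlt y z"
      using G x y by (simp add: Lap_diff)
    from Rfin_sol(1)[OF wg x y this] show ?thesis by simp
  qed
  have S1: "(\<Sum>x\<in>V. \<Sum>y\<in>V. c x y * (G x x - G x y)) = ?n - 1"
  proof -
    have "(\<Sum>x\<in>V. \<Sum>y\<in>V. c x y * (G x x - G x y)) = (\<Sum>x\<in>V. Lap V c (G x) x)"
      unfolding Lap_def by simp
    also have "\<dots> = (\<Sum>x\<in>V. 1 - 1 / ?n)" using G by (intro sum.cong) (auto simp: dlt_def)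
    also have "\<dots> = ?n - 1" using npos by (simp add: field_simps)
    finally show ?thesis .
  qed
  have S2: "(\<Sum>x\<in>V. \<Sum>y\<in>V. c x y * (G y y - G y x)) = ?n - 1"
  proof -
    have "(\<Sum>x\<in>V. \<Sum>y\<in>V. c x y * (G y y - G y x)) = (\<Sum>y\<in>V. \<Sum>x\<in>V. c x y * (G y y - G y x))"
      by (rule sum.swap)
    also have "\<dots> = (\<Sum>x\<in>V. \<Sum>y\<in>V. c x y * (G x x - G x y))"
      using wg_sym[OF wg] by (intro sum.cong) auto
    finally show ?thesis using S1 by simp
  qed
  have "(\<Sum>x\<in>V. \<Sum>y\<in>V. c x y * Rfin V c x y) =
      (\<Sum>x\<in>V. \<Sum>y\<in>V. c x y * (G x x - G x y) + c x y * (G y y - G y x))"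
    using R by (intro sum.cong refl) (simp add: distrib_left[symmetric])
  also have "\<dots> = 2 * (?n - 1)" using S1 S2 by (simp add: sum.distrib)
  finally show ?thesis .
qed

lemma foster2:
  assumes wg: "wg V c" and v: "v \<in> V" and N: "N \<subseteq> V" and vN: "v \<notin> N"
    and cv: "\<forall>y\<in>V. c v y = (if y \<in> N then 1 else 0)"
  shows "(\<Sum>x\<in>N. \<Sum>y\<in>N. Rfin V c x y) = 2 * real (card N) * (\<Sum>x\<in>N. Rfin V c x v) - 2 * real (card N)"
proof -
  have fin: "finite V" using wg_finite[OF wg] .
  have finN: "finite N" using N fin finite_subset by blast
  have sym: "\<forall>x\<in>V. \<forall>y\<in>V. c x y = c y x" using wg_sym[OF wg] by blast
  have "\<forall>a\<in>N. \<exists>g. \<forall>z\<in>V. Lap V c g z = dlt a z - dlt v z"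
    using sol_exists_dlt[OF wg _ v] N by blast
  then obtain h where h: "\<forall>a\<in>N. \<forall>z\<in>V. Lap V c (h a) z = dlt a z - dlt v z" by metis
  let ?k = "real (card N)"
  have Rxv: "Rfin V c x v = Bf V c (h x) (h x)" if x: "x \<in> N" for x
  proof -
    have xV: "x \<in> V" using x N by auto
    have "\<forall>z\<in>V. Lap V c (h x) z = dlt x z - dlt v z" using h x by auto
    then show ?thesis using Rfin_sol(1,2)[OF wg xV v] by simp
  qed
  have Rxy: "Rfin V c x y = Bf V c (h x) (h x) + Bf V c (h y) (h y) - 2 * Bf V c (h x) (h y)"
    if x: "x \<in> N" and y: "y \<in> N" for x y
  proof -
    have "\<forall>z\<in>V. Lap V c (\<lambda>z. h x z - h y z) z = dlt x z - dlt y z"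
      using h x y by (simp add: Lap_diff)
    moreover have xV: "x \<in> V" and yV: "y \<in> V" using x y N by auto
    ultimately have "Rfin V c x y = Bf V c (\<lambda>z. h x z - h y z) (\<lambda>z. h x z - h y z)"
      using Rfin_sol(1,2)[OF wg xV yV] by simp
    then show ?thesis by (simp add: Bf_diff)
  qed
  define D where "D = dlt v"
  have LD: "Lap V c D z = ?k * dlt v z - (if z \<in> N then 1 else 0)" if z: "z \<in> V" for z
  proof (cases "z = v")
    case True
    have "Lap V c D z = (\<Sum>y\<in>V. c v y * (1 - dlt v y))" unfolding Lap_def D_def True by (simp add: dlt_def)
    also have "\<dots> = (\<Sum>y\<in>V. c v y) - (\<Sum>y\<in>V. c v y * dlt v y)" by (simp add: algebra_simps sum_subtractf)
    also have "(\<Sum>y\<in>V. c v y) = (\<Sum>y\<in>V. if y \<in> N then 1 else 0)" using cv by (intro sum.cong) auto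
    also have "\<dots> = ?k" using fin N by (simp add: sum.If_cases Int_absorb1)
    also have "(\<Sum>y\<in>V. c v y * dlt v y) = 0" using sum_dlt[OF fin, of "c v" v] v cv vN by simp
    finally show ?thesis using True vN by (simp add: dlt_def)
  next
    case False
    have "Lap V c D z = (\<Sum>y\<in>V. c z y * (0 - dlt v y))" unfolding Lap_def D_def using False by (simp add: dlt_def)
    also have "\<dots> = - (\<Sum>y\<in>V. c z y * dlt v y)" by (simp add: sum_negf)
    also have "\<dots> = - c z v" using sum_dlt[OF fin, of "c z" v] v by simp
    also have "c z v = c v z" using sym z v by simp
    finally show ?thesis using cv z False by (simp add: dlt_def)
  qed
  have SL: "(\<Sum>y\<in>N. Lap V c (h y) z) = - Lap V c D z" if z: "z \<in> V" for z
  proof -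
    have "(\<Sum>y\<in>N. Lap V c (h y) z) = (\<Sum>y\<in>N. dlt y z - dlt v z)" using h z by (intro sum.cong) auto
    also have "\<dots> = (if z \<in> N then 1 else 0) - ?k * dlt v z"
      using finN by (simp add: sum_subtractf dlt_def)
    finally show ?thesis using LD[OF z] by simp
  qed
  have inner: "(\<Sum>y\<in>N. Bf V c (h x) (h y)) = 1" if x: "x \<in> N" for x
  proof -
    have "(\<Sum>y\<in>N. Bf V c (h x) (h y)) = (\<Sum>y\<in>N. \<Sum>z\<in>V. h x z * Lap V c (h y) z)"
      using Bf_Lap[OF sym] by simp
    also have "\<dots> = (\<Sum>z\<in>V. h x z * (\<Sum>y\<in>N. Lap V c (h y) z))"
      by (simp add: sum.swap[of _ N V] sum_distrib_left)
    also have "\<dots> = (\<Sum>z\<in>V. - (h x z * Lap V c D z))" using SL by (intro sum.cong) auto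
    also have "\<dots> = - Bf V c (h x) D" using Bf_Lap[OF sym] by (simp add: sum_negf)
    also have "\<dots> = - Bf V c D (h x)" by (simp add: Bf_sym)
    also have "\<dots> = - (\<Sum>z\<in>V. D z * Lap V c (h x) z)" using Bf_Lap[OF sym] by simp
    also have "(\<Sum>z\<in>V. D z * Lap V c (h x) z) = (\<Sum>z\<in>V. Lap V c (h x) z * dlt v z)"
      unfolding D_def by (simp add: mult.commute)
    also have "\<dots> = Lap V c (h x) v" using sum_dlt[OF fin] v by simp
    also have "\<dots> = -1" using h x v vN by (auto simp: dlt_def)
    finally show ?thesis by simp
  qed
  have "(\<Sum>x\<in>N. \<Sum>y\<in>N. Rfin V c x y) =
      (\<Sum>x\<in>N. \<Sum>y\<in>N. Rfin V c x v + Rfin V c y v - 2 * Bf V c (h x) (h y))"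
    using Rxy Rxv by (intro sum.cong) auto
  also have "\<dots> = (\<Sum>x\<in>N. ?k * Rfin V c x v + (\<Sum>y\<in>N. Rfin V c y v) - 2 * (\<Sum>y\<in>N. Bf V c (h x) (h y)))"
    by (simp add: sum.distrib sum_subtractf sum_distrib_left)
  also have "\<dots> = (\<Sum>x\<in>N. ?k * Rfin V c x v + (\<Sum>y\<in>N. Rfin V c y v) - 2)"
    using inner by (intro sum.cong) auto
  also have "\<dots> = 2 * ?k * (\<Sum>x\<in>N. Rfin V c x v) - 2 * ?k"
    by (simp add: sum.distrib sum_subtractf sum_distrib_left algebra_simps)
  finally show ?thesis .
qed



definition cC :: "('a \<Rightarrow> 'a \<Rightarrow> bool) \<Rightarrow> 'a \<Rightarrow> 'a \<Rightarrow> real" where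
  "cC adj x y = (if adj x y then 1 else 0)"

definition cW :: "('a \<Rightarrow> 'a \<Rightarrow> bool) \<Rightarrow> 'a set \<Rightarrow> 'a \<Rightarrow> 'a \<Rightarrow> 'a \<Rightarrow> real" where
  "cW adj C z x y = (if x \<in> C \<and> y \<in> C then (if adj x y then 1 else 0)
     else if x \<in> C \<and> y = z then real (card (nbhd adj x - C))
     else if x = z \<and> y \<in> C then real (card (nbhd adj y - C)) else 0)"

definition Sfe :: "('a \<Rightarrow> 'a \<Rightarrow> bool) \<Rightarrow> 'a \<Rightarrow> 'a \<Rightarrow> real set" where
  "Sfe adj x y = {(f x - f y)\<^sup>2 | f. finite_energy adj f \<and> dir_energy adj f \<le> 1}"

lemma eff_Sfe: "eff_resistance adj x y = Sup (Sfe adj x y)"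
  unfolding eff_resistance_def Sfe_def by simp

lemma zero_Sfe: "0 \<in> Sfe adj x y"
proof -
  have "finite_energy adj (\<lambda>_. 0)" unfolding finite_energy_def by (simp add: split_def)
  moreover have "dir_energy adj (\<lambda>_. 0) = 0" unfolding dir_energy_def by (simp add: split_def)
  ultimately show ?thesis unfolding Sfe_def by force
qed

lemma energy_restrict:
  assumes fe: "finite_energy adj f" and C: "finite C"
  shows "Bf C (cC adj) f f \<le> dir_energy adj f"
proof -
  let ?A = "{(u,w). adj u w}"
  let ?phi = "\<lambda>(u,w). (f u - f w)\<^sup>2"
  have "(\<Sum>x\<in>C. \<Sum>y\<in>C. cC adj x y * ((f x - f y) * (f x - f y))) = (\<Sum>p\<in>C\<times>C. if adj (fst p) (snd p) then ?phi p else 0)"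
    unfolding cC_def sum.cartesian_product by (intro sum.cong) (auto simp: power2_eq_square)
  also have "\<dots> = sum ?phi {p \<in> C\<times>C. adj (fst p) (snd p)}"
    using C by (simp add: sum.inter_filter)
  also have "\<dots> = infsum ?phi {p \<in> C\<times>C. adj (fst p) (snd p)}" using C by simp
  also have "\<dots> \<le> infsum ?phi ?A"
    apply (rule infsum_mono_neutral)
    using fe C unfolding finite_energy_def by auto
  finally show ?thesis unfolding Bf_def dir_energy_def by simp
qed

lemma eff_le_Rfin:
  assumes wg: "wg C (cC adj)" and x: "x \<in> C" and y: "y \<in> C"
  shows "eff_resistance adj x y \<le> Rfin C (cC adj) x y" and "bdd_above (Sfe adj x y)"
    and "eff_resistance adj x y \<ge> 0"
proof -
  have R0: "Rfin C (cC adj) x y \<ge> 0" using Rfin_props(1)[OF wg x y] .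
  have le: "s \<le> Rfin C (cC adj) x y" if s: "s \<in> Sfe adj x y" for s
  proof -
    from s obtain f where f: "s = (f x - f y)\<^sup>2" "finite_energy adj f" "dir_energy adj f \<le> 1"
      unfolding Sfe_def by auto
    have "Bf C (cC adj) f f \<le> 1" using energy_restrict[OF f(2) wg_finite[OF wg]] f(3) by simp
    then have "Bf C (cC adj) f f * Rfin C (cC adj) x y \<le> 1 * Rfin C (cC adj) x y"
      using R0 by (intro mult_right_mono) auto
    then show ?thesis using Rfin_props(2)[OF wg x y, of f] f(1) by simp
  qed
  show "eff_resistance adj x y \<le> Rfin C (cC adj) x y"
    unfolding eff_Sfe using zero_Sfe[of adj x y] le by (intro cSup_least) auto
  show bdd: "bdd_above (Sfe adj x y)" using le by (intro bdd_aboveI) auto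
  show "eff_resistance adj x y \<ge> 0"
    unfolding eff_Sfe using zero_Sfe[of adj x y] bdd by (intro cSup_upper2) auto
qed



lemma lift_energy:
  fixes f :: "'a \<Rightarrow> real"
  assumes sym: "\<forall>x y. adj x y \<longrightarrow> adj y x" and finN: "\<forall>x. finite (nbhd adj x)"
    and C: "finite C" and z: "z \<notin> C"
  defines "F \<equiv> (\<lambda>a. if a \<in> C then f a else f z)"
  shows "finite_energy adj F" and "dir_energy adj F = Bf (insert z C) (cW adj C z) f f"
proof -
  let ?A = "{(u,w). adj u w}"
  let ?phi = "\<lambda>(u,w). (F u - F w)\<^sup>2"
  define Q where "Q = Sigma C (nbhd adj)"
  define Q2 where "Q2 = Sigma C (\<lambda>x. nbhd adj x - C)"
  define Q3 where "Q3 = (\<lambda>(a,b). (b,a)) ` Q2"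
  have finQ: "finite Q" unfolding Q_def using C finN by auto
  have finQ2: "finite Q2" unfolding Q2_def using C finN by auto
  have finQ3: "finite Q3" unfolding Q3_def using finQ2 by auto
  have PA: "Q \<union> Q3 \<subseteq> ?A" unfolding Q_def Q3_def Q2_def nbhd_def using sym by auto
  have zero: "?phi p = 0" if "p \<in> ?A - (Q \<union> Q3)" for p
  proof -
    obtain u w where p: "p = (u,w)" by (cases p)
    have "adj u w" using that p by auto
    have "u \<notin> C"
    proof
      assume "u \<in> C" then have "p \<in> Q" unfolding Q_def nbhd_def p using \<open>adj u w\<close> by auto
      then show False using that by auto
    qed
    moreover have "w \<notin> C"
    proof
      assume "w \<in> C"
      then have "(w,u) \<in> Q2" unfolding Q2_def nbhd_def using \<open>adj u w\<close> sym \<open>u \<notin> C\<close> by auto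
      then have "p \<in> Q3" unfolding Q3_def p by force
      then show False using that by auto
    qed
    ultimately show ?thesis unfolding F_def p by simp
  qed
  have summ: "?phi summable_on ?A \<longleftrightarrow> ?phi summable_on (Q \<union> Q3)"
    using zero PA by (intro summable_on_cong_neutral) auto
  then show "finite_energy adj F" unfolding finite_energy_def using finQ finQ3 by simp
  have inf: "infsum ?phi ?A = infsum ?phi (Q \<union> Q3)"
    using zero PA by (intro infsum_cong_neutral) auto
  also have "\<dots> = sum ?phi (Q \<union> Q3)" using finQ finQ3 by simp
  also have "\<dots> = sum ?phi Q + sum ?phi Q3"
  proof (rule sum.union_disjoint)
    show "Q \<inter> Q3 = {}" unfolding Q_def Q3_def Q2_def by auto
  qed (use finQ finQ3 in auto)
  finally have E1: "infsum ?phi ?A = sum ?phi Q + sum ?phi Q3" .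
  have SQ: "sum ?phi Q = (\<Sum>x\<in>C. (\<Sum>y\<in>C. (if adj x y then 1 else 0) * ((f x - f y) * (f x - f y)))
                + real (card (nbhd adj x - C)) * (f x - f z)\<^sup>2)"
  proof -
    have "sum ?phi Q = (\<Sum>x\<in>C. \<Sum>w\<in>nbhd adj x. (F x - F w)\<^sup>2)"
      unfolding Q_def using C finN by (simp add: sum.Sigma)
    also have "\<dots> = (\<Sum>x\<in>C. (\<Sum>y\<in>C. (if adj x y then 1 else 0) * ((f x - f y) * (f x - f y)))
                + real (card (nbhd adj x - C)) * (f x - f z)\<^sup>2)"
    proof (rule sum.cong[OF refl])
      fix x assume x: "x \<in> C"
      have sp: "nbhd adj x = (nbhd adj x \<inter> C) \<union> (nbhd adj x - C)" by auto
      have "(\<Sum>w\<in>nbhd adj x. (F x - F w)\<^sup>2) = (\<Sum>w\<in>nbhd adj x \<inter> C. (F x - F w)\<^sup>2) + (\<Sum>w\<in>nbhd adj x - C. (F x - F w)\<^sup>2)"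
        using finN by (subst sp, intro sum.union_disjoint) auto
      also have "(\<Sum>w\<in>nbhd adj x \<inter> C. (F x - F w)\<^sup>2) = (\<Sum>y\<in>{y\<in>C. adj x y}. (f x - f y)\<^sup>2)"
        unfolding F_def nbhd_def using x by (intro sum.cong) auto
      also have "\<dots> = (\<Sum>y\<in>C. (if adj x y then 1 else 0) * ((f x - f y) * (f x - f y)))"
        using C by (subst sum.inter_filter) (auto simp: power2_eq_square intro!: sum.cong)
      also have "(\<Sum>w\<in>nbhd adj x - C. (F x - F w)\<^sup>2) = real (card (nbhd adj x - C)) * (f x - f z)\<^sup>2"
        unfolding F_def using x by simp
      finally show "(\<Sum>w\<in>nbhd adj x. (F x - F w)\<^sup>2) = (\<Sum>y\<in>C. (if adj x y then 1 else 0) * ((f x - f y) * (f x - f y)))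
                + real (card (nbhd adj x - C)) * (f x - f z)\<^sup>2" .
    qed
    finally show ?thesis .
  qed
  have SQ3: "sum ?phi Q3 = (\<Sum>x\<in>C. real (card (nbhd adj x - C)) * (f x - f z)\<^sup>2)"
  proof -
    have inj: "inj_on (\<lambda>(a,b). (b,a)) Q2" by (auto simp: inj_on_def)
    have "sum ?phi Q3 = (\<Sum>p\<in>Q2. ?phi ((\<lambda>(a,b). (b,a)) p))"
      unfolding Q3_def by (rule sum.reindex[OF inj, unfolded comp_def])
    also have "\<dots> = (\<Sum>x\<in>C. \<Sum>w\<in>nbhd adj x - C. (F w - F x)\<^sup>2)"
      unfolding Q2_def using C finN by (simp add: sum.Sigma split_def)
    also have "\<dots> = (\<Sum>x\<in>C. real (card (nbhd adj x - C)) * (f x - f z)\<^sup>2)"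
      unfolding F_def by (intro sum.cong) (auto simp: power2_commute)
    finally show ?thesis .
  qed
  have B: "2 * Bf (insert z C) (cW adj C z) f f =
     (\<Sum>x\<in>C. (\<Sum>y\<in>C. (if adj x y then 1 else 0) * ((f x - f y) * (f x - f y)))
                + real (card (nbhd adj x - C)) * (f x - f z)\<^sup>2)
     + (\<Sum>x\<in>C. real (card (nbhd adj x - C)) * (f x - f z)\<^sup>2)"
  proof -
    have "2 * Bf (insert z C) (cW adj C z) f f = (\<Sum>x\<in>insert z C. \<Sum>y\<in>insert z C. cW adj C z x y * ((f x - f y) * (f x - f y)))"
      unfolding Bf_def by simp
    also have "\<dots> = (\<Sum>y\<in>insert z C. cW adj C z z y * ((f z - f y) * (f z - f y)))
        + (\<Sum>x\<in>C. \<Sum>y\<in>insert z C. cW adj C z x y * ((f x - f y) * (f x - f y)))"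
      using C z by simp
    also have "(\<Sum>y\<in>insert z C. cW adj C z z y * ((f z - f y) * (f z - f y))) = (\<Sum>x\<in>C. real (card (nbhd adj x - C)) * (f x - f z)\<^sup>2)"
      using C z by (simp add: cW_def power2_eq_square algebra_simps)
    also have "(\<Sum>x\<in>C. \<Sum>y\<in>insert z C. cW adj C z x y * ((f x - f y) * (f x - f y))) =
        (\<Sum>x\<in>C. (\<Sum>y\<in>C. (if adj x y then 1 else 0) * ((f x - f y) * (f x - f y)))
                + real (card (nbhd adj x - C)) * (f x - f z)\<^sup>2)"
    proof (rule sum.cong[OF refl])
      fix x assume x: "x \<in> C"
      have "(\<Sum>y\<in>insert z C. cW adj C z x y * ((f x - f y) * (f x - f y))) =
         cW adj C z x z * ((f x - f z) * (f x - f z)) + (\<Sum>y\<in>C. cW adj C z x y * ((f x - f y) * (f x - f y)))"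
        using C z by simp
      also have "(\<Sum>y\<in>C. cW adj C z x y * ((f x - f y) * (f x - f y))) = (\<Sum>y\<in>C. (if adj x y then 1 else 0) * ((f x - f y) * (f x - f y)))"
        using x by (intro sum.cong) (auto simp: cW_def)
      also have "cW adj C z x z = real (card (nbhd adj x - C))" using x z by (simp add: cW_def)
      finally show "(\<Sum>y\<in>insert z C. cW adj C z x y * ((f x - f y) * (f x - f y))) =
        (\<Sum>y\<in>C. (if adj x y then 1 else 0) * ((f x - f y) * (f x - f y))) + real (card (nbhd adj x - C)) * (f x - f z)\<^sup>2"
        by (simp add: power2_eq_square)
    qed
    finally show ?thesis by simp
  qed
  show "dir_energy adj F = Bf (insert z C) (cW adj C z) f f"
    unfolding dir_energy_def using E1 SQ SQ3 B by simp
qed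



lemma Rfin_W_le:
  assumes sym: "\<forall>x y. adj x y \<longrightarrow> adj y x" and finN: "\<forall>x. finite (nbhd adj x)"
    and C: "finite C" and z: "z \<notin> C" and wg: "wg (insert z C) (cW adj C z)"
    and x: "x \<in> C" and y: "y \<in> C" and bdd: "bdd_above (Sfe adj x y)"
  shows "Rfin (insert z C) (cW adj C z) x y \<le> eff_resistance adj x y"
proof -
  obtain f where f: "Bf (insert z C) (cW adj C z) f f \<le> 1" "(f x - f y)\<^sup>2 = Rfin (insert z C) (cW adj C z) x y"
    using Rfin_props(3)[OF wg] x y by blast
  define F where "F = (\<lambda>a. if a \<in> C then f a else f z)"
  have "finite_energy adj F" "dir_energy adj F = Bf (insert z C) (cW adj C z) f f"
    using lift_energy[OF sym finN C z, of f] unfolding F_def by auto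
  then have "(F x - F y)\<^sup>2 \<in> Sfe adj x y" unfolding Sfe_def using f(1) by auto
  moreover have "(F x - F y)\<^sup>2 = Rfin (insert z C) (cW adj C z) x y" using f(2) x y unfolding F_def by simp
  ultimately show ?thesis unfolding eff_Sfe using bdd by (metis cSup_upper)
qed

definition reach :: "('a \<Rightarrow> 'a \<Rightarrow> bool) \<Rightarrow> 'a set \<Rightarrow> 'a \<Rightarrow> 'a \<Rightarrow> bool" where
  "reach adj G = (\<lambda>a b. adj a b \<and> a \<in> G \<and> b \<in> G)\<^sup>*\<^sup>*"

definition gcomp :: "('a \<Rightarrow> 'a \<Rightarrow> bool) \<Rightarrow> 'a set \<Rightarrow> 'a \<Rightarrow> 'a set" where
  "gcomp adj G x = {y. reach adj G x y}"

lemma crossing: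
  assumes "r\<^sup>*\<^sup>* a b" "a \<in> S" "b \<notin> S"
  shows "\<exists>p q. r\<^sup>*\<^sup>* a p \<and> r p q \<and> p \<in> S \<and> q \<notin> S"
  using assms
proof (induction rule: rtranclp_induct)
  case base
  then show ?case by simp
next
  case (step y b)
  show ?case
  proof (cases "y \<in> S")
    case True
    then show ?thesis using step by blast
  next
    case False
    then show ?thesis using step by blast
  qed
qed

lemma reach_in: "reach adj G x y \<Longrightarrow> x \<in> G \<Longrightarrow> y \<in> G"
  unfolding reach_def by (induction rule: rtranclp_induct) auto

lemma reach_sym:
  assumes sym: "\<forall>x y. adj x y \<longrightarrow> adj y x"
  shows "reach adj G x y \<Longrightarrow> reach adj G y x"
  unfolding reach_def
proof (induction rule: rtranclp_induct)
  case base then show ?case by simp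
next
  case (step y z)
  then show ?case using sym by (metis (mono_tags, lifting) converse_rtranclp_into_rtranclp)
qed

lemma reach_trans: "reach adj G x y \<Longrightarrow> reach adj G y z \<Longrightarrow> reach adj G x z"
  unfolding reach_def by (rule rtranclp_trans)



lemma comp_sub: "x \<in> G \<Longrightarrow> gcomp adj G x \<subseteq> G"
  unfolding gcomp_def using reach_in[of adj G x] by auto

lemma comp_self: "x \<in> gcomp adj G x"
  unfolding gcomp_def reach_def by simp

lemma comp_eq:
  assumes sym: "\<forall>x y. adj x y \<longrightarrow> adj y x" and y: "y \<in> gcomp adj G x"
  shows "gcomp adj G y = gcomp adj G x"
proof -
  have xy: "reach adj G x y" using y unfolding gcomp_def by simp
  have yx: "reach adj G y x" using reach_sym[OF sym xy] .
  show ?thesis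
  proof
    show "gcomp adj G y \<subseteq> gcomp adj G x" unfolding gcomp_def using reach_trans[OF xy] by blast
    show "gcomp adj G x \<subseteq> gcomp adj G y" unfolding gcomp_def using reach_trans[OF yx] by blast
  qed
qed

lemma comp_interior:
  assumes x: "x \<in> G" and v: "v \<in> gcomp adj G x" and vb: "v \<notin> boundary adj G"
  shows "nbhd adj v \<subseteq> gcomp adj G x"
proof
  fix w assume w: "w \<in> nbhd adj v"
  have vG: "v \<in> G" using comp_sub[OF x] v by auto
  then have wG: "w \<in> G" using vb w unfolding boundary_def nbhd_def by auto
  have "reach adj G x v" using v unfolding gcomp_def by simp
  moreover have "adj v w \<and> v \<in> G \<and> w \<in> G" using w vG wG by (simp add: nbhd_def)
  ultimately have "reach adj G x w" unfolding reach_def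
    by (rule rtranclp.rtrancl_into_rtrancl)
  then show "w \<in> gcomp adj G x" unfolding gcomp_def by simp
qed

lemma wg_comp:
  assumes sym: "\<forall>x y. adj x y \<longrightarrow> adj y x" and G: "finite G" and x: "x \<in> G"
  shows "wg (gcomp adj G x) (cC adj)"
proof -
  let ?C = "gcomp adj G x"
  have fin: "finite ?C" using comp_sub[OF x] G finite_subset by blast
  have cut: "\<exists>a\<in>S. \<exists>b\<in>?C-S. cC adj a b > 0" if S: "S \<subseteq> ?C" "S \<noteq> {}" "S \<noteq> ?C" for S
  proof -
    obtain a b where ab: "a \<in> S" "b \<in> ?C" "b \<notin> S" using S by blast
    have xa: "reach adj G x a" using ab S unfolding gcomp_def by auto
    have xb: "reach adj G x b" using ab unfolding gcomp_def by auto
    have "reach adj G a b" by (rule reach_trans[OF reach_sym[OF sym xa] xb])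
    from crossing[OF this[unfolded reach_def] ab(1) ab(3)] obtain p q where
      pq: "(\<lambda>a b. adj a b \<and> a \<in> G \<and> b \<in> G)\<^sup>*\<^sup>* a p" "adj p q" "p \<in> S" "q \<notin> S" "p \<in> G" "q \<in> G"
      by auto
    have xp: "reach adj G x p" using reach_trans[OF xa pq(1)[folded reach_def]] .
    have "reach adj G x q" using xp pq unfolding reach_def by (simp add: rtranclp.rtrancl_into_rtrancl)
    then have "q \<in> ?C" unfolding gcomp_def by simp
    then show ?thesis using pq by (intro bexI[of _ p] bexI[of _ q]) (auto simp: cC_def)
  qed
  have symc: "\<forall>a\<in>?C. \<forall>b\<in>?C. cC adj a b = cC adj b a \<and> cC adj a b \<ge> 0"
  proof -
    have "adj a b = adj b a" for a b using sym by blast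
    then show ?thesis by (simp add: cC_def)
  qed
  show ?thesis unfolding wg_def
  proof (intro conjI allI impI)
    show "finite ?C" using fin by simp
    show "\<forall>a\<in>?C. \<forall>b\<in>?C. cC adj a b = cC adj b a \<and> cC adj a b \<ge> 0" by (rule symc)
    fix S assume "S \<subseteq> ?C \<and> S \<noteq> {} \<and> S \<noteq> ?C"
    then show "\<exists>a\<in>S. \<exists>b\<in>?C-S. cC adj a b > 0" using cut by simp
  qed
qed

lemma wg_W:
  fixes adj :: "'a \<Rightarrow> 'a \<Rightarrow> bool"
  assumes sym: "\<forall>x y. adj x y \<longrightarrow> adj y x" and finN: "\<forall>x. finite (nbhd adj x)"
    and conn: "connected_graph adj" and inf: "infinite (UNIV :: 'a set)"
    and G: "finite G" and x: "x \<in> G" and z: "z \<notin> gcomp adj G x"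
  shows "wg (insert z (gcomp adj G x)) (cW adj (gcomp adj G x) z)"
proof -
  let ?C = "gcomp adj G x"
  let ?W = "insert z ?C"
  let ?c = "cW adj ?C z"
  have finC: "finite ?C" using comp_sub[OF x] G finite_subset by blast
  have wgC: "wg ?C (cC adj)" by (rule wg_comp[OF sym G x])
  obtain y0 where y0: "y0 \<in> ?C" "?c y0 z > 0"
  proof -
    obtain b where b: "b \<notin> ?C" using ex_new_if_finite[OF inf finC] by blast
    have "adj\<^sup>*\<^sup>* x b" using conn unfolding connected_graph_def by simp
    from crossing[OF this comp_self b] obtain p q where pq: "adj p q" "p \<in> ?C" "q \<notin> ?C" by blast
    have "q \<in> nbhd adj p - ?C" using pq unfolding nbhd_def by simp
    then have "card (nbhd adj p - ?C) > 0" using finN by (metis card_gt_0_iff empty_iff finite_Diff)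
    then have "?c p z > 0" using pq z by (simp add: cW_def)
    then show ?thesis using that pq by blast
  qed
  have symc: "\<forall>a\<in>?W. \<forall>b\<in>?W. ?c a b = ?c b a \<and> ?c a b \<ge> 0"
    using sym z by (auto simp: cW_def)
  have cut: "\<exists>a\<in>S. \<exists>b\<in>?W-S. ?c a b > 0" if S: "S \<subseteq> ?W" "S \<noteq> {}" "S \<noteq> ?W" for S
  proof (cases "z \<in> S")
    case False
    then have SC: "S \<subseteq> ?C" using S by auto
    show ?thesis
    proof (cases "S = ?C")
      case True
      then show ?thesis using y0 False by (intro bexI[of _ y0] bexI[of _ z]) auto
    next
      case False
      from wg_cut[OF wgC SC S(2) False] obtain a b where "a \<in> S" "b \<in> ?C - S" "cC adj a b > 0" by blast
      then show ?thesis using SC by (intro bexI[of _ a] bexI[of _ b]) (auto simp: cC_def cW_def)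
    qed
  next
    case True
    define S' where "S' = ?W - S"
    have S'C: "S' \<subseteq> ?C" "S' \<noteq> {}" unfolding S'_def using S True by auto
    show ?thesis
    proof (cases "S' = ?C")
      case True
      then have "y0 \<notin> S" unfolding S'_def using y0 by auto
      moreover have "?c z y0 > 0" using y0 symc by (metis insertCI)
      ultimately show ?thesis using \<open>z \<in> S\<close> y0 by (intro bexI[of _ z] bexI[of _ y0]) auto
    next
      case False
      from wg_cut[OF wgC S'C False] obtain a b where ab: "a \<in> S'" "b \<in> ?C - S'" "cC adj a b > 0" by blast
      have "b \<in> S" "a \<notin> S" "a \<in> ?W" using ab unfolding S'_def by auto
      moreover have "?c b a > 0"
      proof -
        have aC: "a \<in> ?C" "b \<in> ?C" using ab S'C by auto
        have "adj a b" using ab(3) by (simp add: cC_def split: if_splits)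
        then have "adj b a" using sym by blast
        then show ?thesis using aC by (simp add: cW_def)
      qed
      ultimately show ?thesis by (intro bexI[of _ b] bexI[of _ a]) auto
    qed
  qed
  show ?thesis unfolding wg_def
  proof (intro conjI allI impI)
    show "finite ?W" using finC by simp
    show "\<forall>a\<in>?W. \<forall>b\<in>?W. ?c a b = ?c b a \<and> ?c a b \<ge> 0" by (rule symc)
    fix S assume "S \<subseteq> ?W \<and> S \<noteq> {} \<and> S \<noteq> ?W"
    then show "\<exists>a\<in>S. \<exists>b\<in>?W-S. ?c a b > 0" using cut by simp
  qed
qed



lemma folner_comp:
  assumes sym: "\<forall>x y. adj x y \<longrightarrow> adj y x" and G: "finite G" and ne: "G \<noteq> {}"
  shows "\<exists>x\<in>G. real (card (gcomp adj G x \<inter> boundary adj G))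
             \<le> (real (card (boundary adj G)) / real (card G)) * real (card (gcomp adj G x))"
proof (rule ccontr)
  let ?B = "boundary adj G"
  let ?r = "real (card ?B) / real (card G)"
  assume "\<not> ?thesis"
  then have gt: "\<forall>x\<in>G. real (card (gcomp adj G x \<inter> ?B)) > ?r * real (card (gcomp adj G x))" by auto
  have BG: "?B \<subseteq> G" unfolding boundary_def by auto
  have cpos: "real (card (gcomp adj G x)) > 0" if "x \<in> G" for x
    using comp_sub[OF that] G comp_self[of x adj G] by (metis card_gt_0_iff empty_iff finite_subset of_nat_0_less_iff)
  have "(\<Sum>x\<in>G. ?r) < (\<Sum>x\<in>G. real (card (gcomp adj G x \<inter> ?B)) / real (card (gcomp adj G x)))"
    using gt cpos G ne by (intro sum_strict_mono) (auto simp: field_simps)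
  also have "\<dots> = (\<Sum>x\<in>G. \<Sum>y\<in>G. (if y \<in> gcomp adj G x \<and> y \<in> ?B then 1 else 0) / real (card (gcomp adj G x)))"
  proof (rule sum.cong[OF refl])
    fix x assume x: "x \<in> G"
    have "gcomp adj G x \<inter> ?B = {y\<in>G. y \<in> gcomp adj G x \<and> y \<in> ?B}" using BG by auto
    then have "real (card (gcomp adj G x \<inter> ?B)) = (\<Sum>y\<in>G. if y \<in> gcomp adj G x \<and> y \<in> ?B then 1 else 0)"
      using G by (simp add: sum.inter_filter[symmetric])
    then show "real (card (gcomp adj G x \<inter> ?B)) / real (card (gcomp adj G x)) = (\<Sum>y\<in>G. (if y \<in> gcomp adj G x \<and> y \<in> ?B then 1 else 0) / real (card (gcomp adj G x)))"
      by (simp add: sum_divide_distrib)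
  qed
  also have "\<dots> = (\<Sum>y\<in>G. \<Sum>x\<in>G. (if y \<in> gcomp adj G x \<and> y \<in> ?B then 1 else 0) / real (card (gcomp adj G x)))"
    by (rule sum.swap)
  also have "\<dots> = (\<Sum>y\<in>G. if y \<in> ?B then 1 else 0)"
  proof (rule sum.cong[OF refl])
    fix y assume y: "y \<in> G"
    have "(\<Sum>x\<in>G. (if y \<in> gcomp adj G x \<and> y \<in> ?B then 1 else 0) / real (card (gcomp adj G x)))
        = (\<Sum>x\<in>G. (if x \<in> gcomp adj G y \<and> y \<in> ?B then 1 / real (card (gcomp adj G y)) else 0))"
    proof (rule sum.cong[OF refl])
      fix x assume x: "x \<in> G"
      have iff: "y \<in> gcomp adj G x \<longleftrightarrow> x \<in> gcomp adj G y"
        unfolding gcomp_def using reach_sym[OF sym, of G x y] reach_sym[OF sym, of G y x] by auto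
      show "(if y \<in> gcomp adj G x \<and> y \<in> ?B then 1 else 0) / real (card (gcomp adj G x)) =
          (if x \<in> gcomp adj G y \<and> y \<in> ?B then 1 / real (card (gcomp adj G y)) else 0)"
        using iff comp_eq[OF sym, of x G y] by auto
    qed
    also have "\<dots> = (if y \<in> ?B then (\<Sum>x\<in>G. (if x \<in> gcomp adj G y then 1 / real (card (gcomp adj G y)) else 0)) else 0)"
      by simp
    also have "(\<Sum>x\<in>G. (if x \<in> gcomp adj G y then 1 / real (card (gcomp adj G y)) else 0)) = (\<Sum>x\<in>G \<inter> gcomp adj G y. 1 / real (card (gcomp adj G y)))"
      using G by (rule sum.inter_restrict[symmetric])
    also have "G \<inter> gcomp adj G y = gcomp adj G y" using comp_sub[OF y] by auto
    also have "(\<Sum>x\<in>gcomp adj G y. 1 / real (card (gcomp adj G y))) = 1" using cpos[OF y] by simp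
    finally show "(\<Sum>x\<in>G. (if y \<in> gcomp adj G x \<and> y \<in> ?B then 1 else 0) / real (card (gcomp adj G x))) = (if y \<in> ?B then 1 else 0)" by simp
  qed
  also have "\<dots> = real (card ?B)" using G BG by (simp add: sum.If_cases Int_absorb1)
  also have "(\<Sum>x\<in>G. ?r) = real (card ?B)" using G ne by simp
  finally show False by simp
qed



lemma aut_energy:
  assumes b: "bij \<sigma>" and aut: "\<forall>u w. adj u w \<longleftrightarrow> adj (\<sigma> u) (\<sigma> w)"
  shows "finite_energy adj (\<lambda>a. h (\<sigma> a)) \<longleftrightarrow> finite_energy adj h"
    and "dir_energy adj (\<lambda>a. h (\<sigma> a)) = dir_energy adj h"
proof -
  let ?A = "{(u,w). adj u w}"
  let ?g = "\<lambda>(u,w). (\<sigma> u, \<sigma> w)"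
  let ?phi = "\<lambda>(u,w). (h u - h w)\<^sup>2"
  have inj: "inj \<sigma>" using b bij_def by blast
  have bb: "bij_betw ?g ?A ?A"
  proof (rule bij_betw_imageI)
    show "inj_on ?g ?A" using inj by (auto simp: inj_on_def inj_def)
    show "?g ` ?A = ?A"
    proof
      show "?g ` ?A \<subseteq> ?A" using aut by auto
      show "?A \<subseteq> ?g ` ?A"
      proof
        fix p assume p: "p \<in> ?A"
        obtain a c where pa: "p = (a,c)" by (cases p)
        have e1: "\<sigma> (inv \<sigma> a) = a" "\<sigma> (inv \<sigma> c) = c" using b by (simp_all add: surj_f_inv_f bij_is_surj)
        have "adj (\<sigma> (inv \<sigma> a)) (\<sigma> (inv \<sigma> c))" using p pa e1 by simp
        then have "adj (inv \<sigma> a) (inv \<sigma> c)" using aut[rule_format, of "inv \<sigma> a" "inv \<sigma> c"] by simp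
        then have "(inv \<sigma> a, inv \<sigma> c) \<in> ?A" by simp
        moreover have "?g (inv \<sigma> a, inv \<sigma> c) = p" using e1 pa by simp
        ultimately show "p \<in> ?g ` ?A" by (rule rev_image_eqI[OF _ sym])
      qed
    qed
  qed
  have eq: "(\<lambda>x. ?phi (?g x)) = (\<lambda>(u,w). (h (\<sigma> u) - h (\<sigma> w))\<^sup>2)" by (auto simp: fun_eq_iff)
  show "finite_energy adj (\<lambda>a. h (\<sigma> a)) \<longleftrightarrow> finite_energy adj h"
    unfolding finite_energy_def using summable_on_reindex_bij_betw[OF bb, of ?phi] eq by simp
  show "dir_energy adj (\<lambda>a. h (\<sigma> a)) = dir_energy adj h"
    unfolding dir_energy_def using infsum_reindex_bij_betw[OF bb, of ?phi] eq by simp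
qed

lemma eff_aut:
  assumes b: "bij \<sigma>" and aut: "\<forall>u w. adj u w \<longleftrightarrow> adj (\<sigma> u) (\<sigma> w)"
  shows "eff_resistance adj (\<sigma> a) (\<sigma> c) = eff_resistance adj a c"
proof -
  have "Sfe adj (\<sigma> a) (\<sigma> c) = Sfe adj a c"
  proof
    show "Sfe adj (\<sigma> a) (\<sigma> c) \<subseteq> Sfe adj a c"
    proof
      fix s assume "s \<in> Sfe adj (\<sigma> a) (\<sigma> c)"
      then obtain f where f: "s = (f (\<sigma> a) - f (\<sigma> c))\<^sup>2" "finite_energy adj f" "dir_energy adj f \<le> 1"
        unfolding Sfe_def by auto
      have "finite_energy adj (\<lambda>x. f (\<sigma> x))" "dir_energy adj (\<lambda>x. f (\<sigma> x)) \<le> 1"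
        using aut_energy[OF b aut, of f] f by auto
      then show "s \<in> Sfe adj a c" unfolding Sfe_def mem_Collect_eq using f(1)
        by (intro exI[of _ "\<lambda>x. f (\<sigma> x)"]) simp
    qed
    show "Sfe adj a c \<subseteq> Sfe adj (\<sigma> a) (\<sigma> c)"
    proof
      fix s assume "s \<in> Sfe adj a c"
      then obtain f where f: "s = (f a - f c)\<^sup>2" "finite_energy adj f" "dir_energy adj f \<le> 1"
        unfolding Sfe_def by auto
      define h where "h = (\<lambda>x. f (inv \<sigma> x))"
      have hs: "(\<lambda>x. h (\<sigma> x)) = f" unfolding h_def using b by (auto simp: fun_eq_iff inv_f_f bij_is_inj)
      have "finite_energy adj h" "dir_energy adj h \<le> 1"
        using aut_energy[OF b aut, of h] f hs by auto
      moreover have "h (\<sigma> a) = f a" "h (\<sigma> c) = f c" using fun_cong[OF hs] by auto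
      then have "s = (h (\<sigma> a) - h (\<sigma> c))\<^sup>2" using f(1) by simp
      ultimately show "s \<in> Sfe adj (\<sigma> a) (\<sigma> c)" unfolding Sfe_def mem_Collect_eq
        by (intro exI[of _ h]) simp
    qed
  qed
  then show ?thesis unfolding eff_Sfe by simp
qed

lemma nbhd_aut:
  assumes b: "bij \<sigma>" and aut: "\<forall>u w. adj u w \<longleftrightarrow> adj (\<sigma> u) (\<sigma> w)"
  shows "nbhd adj (\<sigma> v) = \<sigma> ` nbhd adj v"
proof
  show "\<sigma> ` nbhd adj v \<subseteq> nbhd adj (\<sigma> v)" using aut unfolding nbhd_def by auto
  show "nbhd adj (\<sigma> v) \<subseteq> \<sigma> ` nbhd adj v"
  proof
    fix w assume w: "w \<in> nbhd adj (\<sigma> v)"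
    have e: "\<sigma> (inv \<sigma> w) = w" using b by (simp add: surj_f_inv_f bij_is_surj)
    have "adj (\<sigma> v) (\<sigma> (inv \<sigma> w))" using w e unfolding nbhd_def by simp
    then have "adj v (inv \<sigma> w)" using aut[rule_format, of v "inv \<sigma> w"] by simp
    then have "inv \<sigma> w \<in> nbhd adj v" unfolding nbhd_def by simp
    then show "w \<in> \<sigma> ` nbhd adj v" using e by (intro image_eqI[of w \<sigma> "inv \<sigma> w"]) auto
  qed
qed

definition TF :: "('a \<Rightarrow> 'a \<Rightarrow> bool) \<Rightarrow> 'a \<Rightarrow> real" where
  "TF adj v = (\<Sum>x\<in>nbhd adj v. \<Sum>y\<in>nbhd adj v. eff_resistance adj x y)"

lemma TF_aut:
  assumes b: "bij \<sigma>" and aut: "\<forall>u w. adj u w \<longleftrightarrow> adj (\<sigma> u) (\<sigma> w)"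
  shows "TF adj (\<sigma> v) = TF adj v"
proof -
  have inj: "inj_on \<sigma> A" for A by (rule inj_on_subset[OF bij_is_inj[OF b] subset_UNIV])
  have "TF adj (\<sigma> v) = (\<Sum>x\<in>\<sigma> ` nbhd adj v. \<Sum>y\<in>\<sigma> ` nbhd adj v. eff_resistance adj x y)"
    by (simp only: TF_def nbhd_aut[OF b aut])
  also have "\<dots> = (\<Sum>x\<in>nbhd adj v. \<Sum>y\<in>nbhd adj v. eff_resistance adj (\<sigma> x) (\<sigma> y))"
    by (simp only: sum.reindex[OF inj] o_def)
  also have "\<dots> = TF adj v" by (simp only: TF_def eff_aut[OF b aut])
  finally show ?thesis .
qed

lemma TF_const:
  assumes "vertex_transitive adj"
  shows "TF adj u = TF adj v"
proof -
  obtain \<sigma> where s: "bij \<sigma>" "\<forall>a w. adj a w \<longleftrightarrow> adj (\<sigma> a) (\<sigma> w)" "\<sigma> v = u"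
    using assms[unfolded vertex_transitive_def, rule_format, of v u] by blast
  show ?thesis using TF_aut[OF s(1,2), of v] s(3) by simp
qed



lemma upper_bound:
  fixes adj :: "'a \<Rightarrow> 'a \<Rightarrow> bool"
  assumes sym: "\<forall>x y. adj x y \<longrightarrow> adj y x" and irr: "\<forall>x. \<not> adj x x"
    and finN: "\<forall>x. finite (nbhd adj x)" and regk: "\<forall>x. card (nbhd adj x) = k"
    and vt: "vertex_transitive adj"
    and G: "finite G" and x: "x \<in> G"
  defines "C \<equiv> gcomp adj G x" and "I \<equiv> gcomp adj G x - boundary adj G"
  shows "real (card I) * TF adj v \<le> 4 * real k * real (card C) - 2 * real k * real (card I)"
proof -
  let ?c = "cC adj"
  let ?R = "Rfin C ?c"
  define Sx where "Sx w = (\<Sum>y\<in>C. ?c w y * ?R w y)" for w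
  have wgC: "wg C ?c" unfolding C_def by (rule wg_comp[OF sym G x])
  have finC: "finite C" using wg_finite[OF wgC] .
  have xC: "x \<in> C" unfolding C_def by (rule comp_self)
  have IC: "I \<subseteq> C" unfolding I_def C_def by auto
  have finI: "finite I" using IC finC finite_subset by blast
  have Sx_nn: "Sx w \<ge> 0" if w: "w \<in> C" for w
    unfolding Sx_def using Rfin_props(1)[OF wgC w] w by (intro sum_nonneg) (auto simp: cC_def)
  have per: "TF adj v \<le> 2 * real k * Sx w - 2 * real k" if w: "w \<in> I" for w
  proof -
    have wC: "w \<in> C" using w IC by auto
    have NC: "nbhd adj w \<subseteq> C" using w unfolding I_def C_def
      by (intro comp_interior[OF x]) auto
    have wN: "w \<notin> nbhd adj w" using irr unfolding nbhd_def by simp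
    have cw: "\<forall>y\<in>C. ?c w y = (if y \<in> nbhd adj w then 1 else 0)" unfolding cC_def nbhd_def by simp
    have "TF adj v = TF adj w" by (rule TF_const[OF vt])
    also have "\<dots> \<le> (\<Sum>a\<in>nbhd adj w. \<Sum>b\<in>nbhd adj w. ?R a b)"
      unfolding TF_def using NC eff_le_Rfin(1)[OF wgC] by (intro sum_mono) blast
    also have "\<dots> = 2 * real (card (nbhd adj w)) * (\<Sum>a\<in>nbhd adj w. ?R a w) - 2 * real (card (nbhd adj w))"
      by (rule foster2[OF wgC wC NC wN cw])
    also have "(\<Sum>a\<in>nbhd adj w. ?R a w) = Sx w"
    proof -
      have "Sx w = (\<Sum>y\<in>C. if y \<in> nbhd adj w then ?R w y else 0)"
        unfolding Sx_def using cw by (intro sum.cong) auto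
      also have "\<dots> = (\<Sum>y\<in>C \<inter> nbhd adj w. ?R w y)" using finC by (rule sum.inter_restrict[symmetric])
      also have "C \<inter> nbhd adj w = nbhd adj w" using NC by auto
      finally show ?thesis by (simp add: Rfin_sym)
    qed
    finally show ?thesis using regk by simp
  qed
  have "real (card I) * TF adj v = (\<Sum>w\<in>I. TF adj v)" by simp
  also have "\<dots> \<le> (\<Sum>w\<in>I. 2 * real k * Sx w - 2 * real k)" using per by (rule sum_mono)
  also have "\<dots> = 2 * real k * (\<Sum>w\<in>I. Sx w) - 2 * real k * real (card I)"
    by (simp add: sum_subtractf sum_distrib_left)
  finally have s1: "real (card I) * TF adj v \<le> 2 * real k * (\<Sum>w\<in>I. Sx w) - 2 * real k * real (card I)" .
  have "(\<Sum>w\<in>I. Sx w) \<le> (\<Sum>w\<in>C. Sx w)" using finC IC Sx_nn by (intro sum_mono2) auto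
  also have "(\<Sum>w\<in>C. Sx w) = 2 * (real (card C) - 1)"
    unfolding Sx_def using foster[OF wgC] xC by auto
  finally have "(\<Sum>w\<in>I. Sx w) \<le> 2 * real (card C)" by simp
  then have "2 * real k * (\<Sum>w\<in>I. Sx w) \<le> 2 * real k * (2 * real (card C))"
    by (intro mult_left_mono) auto
  then show ?thesis using s1 by linarith
qed



lemma lower_bound:
  fixes adj :: "'a \<Rightarrow> 'a \<Rightarrow> bool"
  assumes sym: "\<forall>x y. adj x y \<longrightarrow> adj y x" and irr: "\<forall>x. \<not> adj x x"
    and finN: "\<forall>x. finite (nbhd adj x)" and regk: "\<forall>x. card (nbhd adj x) = k"
    and vt: "vertex_transitive adj" and conn: "connected_graph adj"
    and inf: "infinite (UNIV :: 'a set)"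
    and G: "finite G" and x: "x \<in> G"
  defines "C \<equiv> gcomp adj G x" and "I \<equiv> gcomp adj G x - boundary adj G"
    and "Bd \<equiv> gcomp adj G x \<inter> boundary adj G"
  shows "real (card I) * TF adj v \<ge> 4 * real k * real (card C) - 8 * (real k)\<^sup>2 * real (card Bd) - 2 * real k * real (card I)"
proof -
  have wgC: "wg C (cC adj)" unfolding C_def by (rule wg_comp[OF sym G x])
  have finC: "finite C" using wg_finite[OF wgC] .
  obtain z where z: "z \<notin> C" using ex_new_if_finite[OF inf finC] by blast
  define W where "W = insert z C"
  define cw where "cw = cW adj C z"
  let ?R = "Rfin W cw"
  have wgW: "wg W cw" unfolding W_def cw_def C_def by (rule wg_W[OF sym finN conn inf G x z[unfolded C_def]])
  define Sx where "Sx w = (\<Sum>y\<in>W. cw w y * ?R w y)" for w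
  have xC: "x \<in> C" unfolding C_def by (rule comp_self)
  have IC: "I \<subseteq> C" unfolding I_def C_def by auto
  have BdC: "Bd \<subseteq> C" unfolding Bd_def C_def by auto
  have CIB: "C = I \<union> Bd" "I \<inter> Bd = {}" unfolding C_def I_def Bd_def by auto
  have finI: "finite I" using IC finC finite_subset by blast
  have finBd: "finite Bd" using BdC finC finite_subset by blast
  have finW: "finite W" unfolding W_def using finC by simp
  have cwnat: "\<exists>n::nat. cw a b = real n" for a b
    unfolding cw_def cW_def by (auto intro: exI[of _ 0] exI[of _ 1])
  have cwnn: "cw a b \<ge> 0" for a b using cwnat[of a b] by auto
  have term_bd: "cw a b * ?R a b \<le> 2 * cw a b" and term_nn: "cw a b * ?R a b \<ge> 0"
    if ab: "a \<in> W" "b \<in> W" for a b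
  proof -
    show "cw a b * ?R a b \<le> 2 * cw a b"
    proof (cases "cw a b = 0")
      case True then show ?thesis by simp
    next
      case False
      then have "cw a b \<ge> 1" using cwnat[of a b] by auto
      then have "?R a b \<le> 2" by (rule Rfin_le2[OF wgW ab])
      then show ?thesis using cwnn[of a b] mult_left_mono[of "?R a b" 2 "cw a b"] by (simp add: mult.commute)
    qed
    show "cw a b * ?R a b \<ge> 0" using Rfin_props(1)[OF wgW ab] cwnn[of a b] by simp
  qed
  have IN: "nbhd adj w \<subseteq> C" if w: "w \<in> I" for w
    using w unfolding I_def C_def by (intro comp_interior[OF x]) auto
  have deg: "(\<Sum>y\<in>W. cw w y) = real k" if w: "w \<in> C" for w
  proof -
    have "(\<Sum>y\<in>W. cw w y) = cw w z + (\<Sum>y\<in>C. cw w y)" unfolding W_def using finC z by simp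
    also have "cw w z = real (card (nbhd adj w - C))" unfolding cw_def cW_def using w z by simp
    also have "(\<Sum>y\<in>C. cw w y) = (\<Sum>y\<in>C. if y \<in> nbhd adj w then 1 else 0)"
      unfolding cw_def cW_def nbhd_def using w by (intro sum.cong) auto
    also have "\<dots> = real (card (C \<inter> nbhd adj w))"
      using finC by (simp add: sum.inter_restrict[symmetric])
    also have "real (card (nbhd adj w - C)) + real (card (C \<inter> nbhd adj w)) = real (card (nbhd adj w))"
      using card_Int_Diff[OF finN[rule_format, of w], of C] by (simp add: Int_commute)
    finally show ?thesis using regk by simp
  qed
  have Sx_bd: "Sx w \<le> 2 * real k" "Sx w \<ge> 0" if w: "w \<in> C" for w
  proof -
    have wW: "w \<in> W" using w unfolding W_def by simp
    have "Sx w \<le> (\<Sum>y\<in>W. 2 * cw w y)" unfolding Sx_def using term_bd wW by (intro sum_mono) auto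
    also have "\<dots> = 2 * real k" using deg[OF w] by (simp add: sum_distrib_left[symmetric])
    finally show "Sx w \<le> 2 * real k" .
    show "Sx w \<ge> 0" unfolding Sx_def using term_nn wW by (intro sum_nonneg) auto
  qed
  have zrow: "(\<Sum>y\<in>W. cw z y * ?R z y) \<le> 2 * real k * real (card Bd)"
  proof -
    have zW: "z \<in> W" unfolding W_def by simp
    have "(\<Sum>y\<in>W. cw z y * ?R z y) \<le> (\<Sum>y\<in>W. 2 * cw z y)" using term_bd zW by (intro sum_mono) auto
    also have "(\<Sum>y\<in>W. 2 * cw z y) = 2 * (\<Sum>y\<in>C. cw z y)"
      unfolding W_def using finC z by (simp add: cw_def cW_def sum_distrib_left)
    also have "(\<Sum>y\<in>C. cw z y) = (\<Sum>y\<in>Bd. cw z y)"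
    proof (rule sum.mono_neutral_right[OF finC BdC])
      show "\<forall>y\<in>C - Bd. cw z y = 0"
      proof
        fix y assume y: "y \<in> C - Bd"
        then have "y \<in> I" using CIB by auto
        then have e: "nbhd adj y - C = {}" using IN by auto
        have yC: "y \<in> C" using y by simp
        show "cw z y = 0" using yC z unfolding cw_def cW_def by (simp add: e)
      qed
    qed
    also have "\<dots> \<le> (\<Sum>y\<in>Bd. real k)"
    proof (rule sum_mono)
      fix y assume y: "y \<in> Bd"
      have "cw z y = real (card (nbhd adj y - C))" using y BdC z unfolding cw_def cW_def by auto
      also have "\<dots> \<le> real (card (nbhd adj y))" using finN by (simp add: card_mono)
      finally show "cw z y \<le> real k" using regk by simp
    qed
    finally show ?thesis by (simp add: mult.commute mult.left_commute)
  qed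
  have SC: "(\<Sum>w\<in>C. Sx w) \<ge> 2 * real (card C) - 2 * real k * real (card Bd)"
  proof -
    define zA where "zA = (\<Sum>b\<in>W. cw z b * ?R z b)"
    define zS where "zS = (\<Sum>w\<in>C. Sx w)"
    define zK where "zK = 2 * real k * real (card Bd)"
    have "2 * (real (card W) - 1) = (\<Sum>a\<in>W. \<Sum>b\<in>W. cw a b * ?R a b)"
      using foster[OF wgW] W_def by simp
    also have "\<dots> = zA + zS"
      unfolding zA_def zS_def W_def Sx_def using finC z by simp
    finally have e1: "2 * (real (card W) - 1) = zA + zS" .
    have e2: "real (card W) = real (card C) + 1" unfolding W_def using finC z by simp
    have e3: "zA \<le> zK" using zrow unfolding zA_def zK_def .
    from e1 e2 e3 have "2 * real (card C) - zK \<le> zS" by (simp add: algebra_simps)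
    then show ?thesis unfolding zS_def zK_def .
  qed
  have SI: "(\<Sum>w\<in>I. Sx w) \<ge> 2 * real (card C) - 4 * real k * real (card Bd)"
  proof -
    have "(\<Sum>w\<in>C. Sx w) = (\<Sum>w\<in>I. Sx w) + (\<Sum>w\<in>Bd. Sx w)"
      unfolding CIB(1) using finI finBd CIB(2) by (rule sum.union_disjoint)
    moreover have "(\<Sum>w\<in>Bd. Sx w) \<le> (\<Sum>w\<in>Bd. 2 * real k)" using Sx_bd BdC by (intro sum_mono) auto
    moreover have "(\<Sum>w\<in>Bd. 2 * real k) = 2 * real k * real (card Bd)" by simp
    ultimately show ?thesis using SC by linarith
  qed
  have per: "TF adj v \<ge> 2 * real k * Sx w - 2 * real k" if w: "w \<in> I" for w
  proof -
    have wC: "w \<in> C" using w IC by auto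
    have wW: "w \<in> W" using wC unfolding W_def by simp
    have NC: "nbhd adj w \<subseteq> C" by (rule IN[OF w])
    have NW: "nbhd adj w \<subseteq> W" using NC unfolding W_def by auto
    have wN: "w \<notin> nbhd adj w" using irr unfolding nbhd_def by simp
    have cwv: "\<forall>y\<in>W. cw w y = (if y \<in> nbhd adj w then 1 else 0)"
    proof
      fix y assume y: "y \<in> W"
      show "cw w y = (if y \<in> nbhd adj w then 1 else 0)"
      proof (cases "y = z")
        case True
        have e: "nbhd adj w - C = {}" using NC by auto
        have zn: "z \<notin> nbhd adj w" using NC z by auto
        show ?thesis using True wC z zn unfolding cw_def cW_def by (simp add: e)
      next
        case False
        then have "y \<in> C" using y unfolding W_def by auto
        then show ?thesis using wC unfolding cw_def cW_def nbhd_def by auto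
      qed
    qed
    have "2 * real (card (nbhd adj w)) * (\<Sum>a\<in>nbhd adj w. ?R a w) - 2 * real (card (nbhd adj w))
        = (\<Sum>a\<in>nbhd adj w. \<Sum>b\<in>nbhd adj w. ?R a b)"
      by (rule foster2[OF wgW wW NW wN cwv, symmetric])
    also have "\<dots> \<le> (\<Sum>a\<in>nbhd adj w. \<Sum>b\<in>nbhd adj w. eff_resistance adj a b)"
    proof (intro sum_mono)
      fix a b assume a: "a \<in> nbhd adj w" and b: "b \<in> nbhd adj w"
      have aC: "a \<in> C" and bC: "b \<in> C" using a b NC by auto
      show "?R a b \<le> eff_resistance adj a b" unfolding W_def cw_def
        by (rule Rfin_W_le[OF sym finN finC z wgW[unfolded W_def cw_def] aC bC eff_le_Rfin(2)[OF wgC aC bC]])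
    qed
    also have "\<dots> = TF adj w" unfolding TF_def ..
    also have "\<dots> = TF adj v" by (rule TF_const[OF vt])
    also have "(\<Sum>a\<in>nbhd adj w. ?R a w) = Sx w"
    proof -
      have "Sx w = (\<Sum>y\<in>W. if y \<in> nbhd adj w then ?R w y else 0)"
        unfolding Sx_def using cwv by (intro sum.cong) auto
      also have "\<dots> = (\<Sum>y\<in>W \<inter> nbhd adj w. ?R w y)" using finW by (rule sum.inter_restrict[symmetric])
      also have "W \<inter> nbhd adj w = nbhd adj w" using NW by auto
      finally show ?thesis by (simp add: Rfin_sym)
    qed
    finally show ?thesis using regk by simp
  qed
  have s0: "(\<Sum>w\<in>I. 2 * real k * Sx w - 2 * real k) \<le> (\<Sum>w\<in>I. TF adj v)" using per by (intro sum_mono) auto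
  have s00: "(\<Sum>w\<in>I. 2 * real k * Sx w - 2 * real k) = 2 * real k * (\<Sum>w\<in>I. Sx w) - 2 * real k * real (card I)"
    by (simp add: sum_subtractf sum_distrib_left)
  have s000: "(\<Sum>w\<in>I. TF adj v) = real (card I) * TF adj v" by simp
  have s1: "real (card I) * TF adj v \<ge> 2 * real k * (\<Sum>w\<in>I. Sx w) - 2 * real k * real (card I)"
    using s0 s00 s000 by linarith
  have "2 * real k * (\<Sum>w\<in>I. Sx w) \<ge> 2 * real k * (2 * real (card C) - 4 * real k * real (card Bd))"
    using SI by (intro mult_left_mono) auto
  moreover have "2 * real k * (2 * real (card C) - 4 * real k * real (card Bd)) = 4 * real k * real (card C) - 8 * (real k)\<^sup>2 * real (card Bd)"
    by (simp add: algebra_simps power2_eq_square)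
  ultimately show ?thesis using s1 by linarith
qed



lemma key_estimate:
  fixes adj :: "'a \<Rightarrow> 'a \<Rightarrow> bool"
  assumes sym: "\<forall>x y. adj x y \<longrightarrow> adj y x" and irr: "\<forall>x. \<not> adj x x"
    and finN: "\<forall>x. finite (nbhd adj x)" and regk: "\<forall>x. card (nbhd adj x) = k"
    and vt: "vertex_transitive adj" and conn: "connected_graph adj"
    and inf: "infinite (UNIV :: 'a set)"
    and G: "finite G" and neG: "G \<noteq> {}" and d: "real (card (boundary adj G)) \<le> \<delta> * real (card G)"
    and dpos: "\<delta> > 0"
  shows "\<bar>TF adj v - 2 * real k\<bar> \<le> \<delta> * (\<bar>TF adj v\<bar> + 2 * real k + 8 * (real k)\<^sup>2)"
proof -
  let ?T = "TF adj v"
  let ?M = "\<bar>TF adj v\<bar> + 2 * real k + 8 * (real k)\<^sup>2"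
  obtain x where x: "x \<in> G" and fx: "real (card (gcomp adj G x \<inter> boundary adj G))
             \<le> (real (card (boundary adj G)) / real (card G)) * real (card (gcomp adj G x))"
    using folner_comp[OF sym G neG] by blast
  define C where "C = gcomp adj G x"
  define I where "I = gcomp adj G x - boundary adj G"
  define Bd where "Bd = gcomp adj G x \<inter> boundary adj G"
  have finC: "finite C" unfolding C_def using comp_sub[OF x] G finite_subset by blast
  have cC: "card C = card Bd + card I" unfolding C_def Bd_def I_def
    using card_Int_Diff[OF finC[unfolded C_def]] by simp
  have Cpos: "real (card C) > 0" unfolding C_def using finC[unfolded C_def] comp_self[of x adj G]
    by (metis card_gt_0_iff empty_iff of_nat_0_less_iff)
  have Gpos: "real (card G) > 0" using G neG by (simp add: card_gt_0_iff)
  have rle: "real (card (boundary adj G)) / real (card G) \<le> \<delta>" using d Gpos by (simp add: divide_le_eq)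
  have bb: "real (card Bd) \<le> \<delta> * real (card C)"
  proof -
    have "real (card Bd) \<le> (real (card (boundary adj G)) / real (card G)) * real (card C)"
      using fx unfolding Bd_def C_def .
    also have "\<dots> \<le> \<delta> * real (card C)" using rle by (intro mult_right_mono) auto
    finally show ?thesis .
  qed
  have up: "real (card I) * ?T \<le> 4 * real k * real (card C) - 2 * real k * real (card I)"
    unfolding I_def C_def by (rule upper_bound[OF sym irr finN regk vt G x])
  have lo: "real (card I) * ?T \<ge> 4 * real k * real (card C) - 8 * (real k)\<^sup>2 * real (card Bd) - 2 * real k * real (card I)"
    unfolding I_def C_def Bd_def by (rule lower_bound[OF sym irr finN regk vt conn inf G x])
  define c where "c = real (card C)"
  define b where "b = real (card Bd)"
  define i where "i = real (card I)"
  have ci: "i = c - b" unfolding i_def c_def b_def using cC by simp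
  have b0: "b \<ge> 0" unfolding b_def by simp
  have c0: "c > 0" unfolding c_def using Cpos .
  have bd: "b \<le> \<delta> * c" unfolding b_def c_def using bb .
  have e1: "c * (?T - 2 * real k) = i * ?T - (4 * real k * c - 2 * real k * i) + b * (?T + 2 * real k)"
    unfolding ci by (simp add: algebra_simps)
  have up': "i * ?T - (4 * real k * c - 2 * real k * i) \<le> 0" using up unfolding i_def c_def by simp
  have sq: "(real k)\<^sup>2 \<ge> 0" by simp
  have ab1: "?T \<le> \<bar>?T\<bar>" "- ?T \<le> \<bar>?T\<bar>" by auto
  have M1: "?T + 2 * real k \<le> ?M" using sq ab1 by linarith
  have M2: "8 * (real k)\<^sup>2 - 2 * real k - ?T \<le> ?M" using sq ab1 by simp
  have "b * (?T + 2 * real k) \<le> b * ?M" using M1 b0 by (rule mult_left_mono)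
  also have "\<dots> \<le> (\<delta> * c) * ?M" using bd by (intro mult_right_mono) auto
  finally have "c * (?T - 2 * real k) \<le> c * (\<delta> * ?M)" using e1 up' by (simp add: algebra_simps)
  then have A: "?T - 2 * real k \<le> \<delta> * ?M" using c0 by simp
  have e2: "c * (2 * real k - ?T) = (4 * real k * c - 8 * (real k)\<^sup>2 * b - 2 * real k * i) - i * ?T + b * (8 * (real k)\<^sup>2 - 2 * real k - ?T)"
    unfolding ci by (simp add: algebra_simps)
  have lo': "(4 * real k * c - 8 * (real k)\<^sup>2 * b - 2 * real k * i) - i * ?T \<le> 0" using lo unfolding i_def c_def b_def by simp
  have "b * (8 * (real k)\<^sup>2 - 2 * real k - ?T) \<le> b * ?M" using M2 b0 by (rule mult_left_mono)
  also have "\<dots> \<le> (\<delta> * c) * ?M" using bd by (intro mult_right_mono) auto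
  finally have "c * (2 * real k - ?T) \<le> c * (\<delta> * ?M)" using e2 lo' by (simp add: algebra_simps)
  then have B: "2 * real k - ?T \<le> \<delta> * ?M" using c0 by simp
  show ?thesis using A B by linarith
qed



theorem corollary3:
  fixes adj :: "'a \<Rightarrow> 'a \<Rightarrow> bool" and k :: nat and v :: 'a
  assumes "simple_graph adj"
    and "infinite (UNIV :: 'a set)"
    and "connected_graph adj"
    and "vertex_transitive adj"
    and "smallish adj"
    and "regular_graph adj k"
  shows "(\<Sum>x\<in>nbhd adj v. \<Sum>y\<in>nbhd adj v. eff_resistance adj x y) / 2 = real k"
proof -
  have sym: "\<forall>x y. adj x y \<longrightarrow> adj y x" and irr: "\<forall>x. \<not> adj x x"
    using assms(1) unfolding simple_graph_def by auto
  have finN: "\<forall>x. finite (nbhd adj x)" and regk: "\<forall>x. card (nbhd adj x) = k"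
    using assms(6) unfolding regular_graph_def by auto
  let ?T = "TF adj v"
  let ?M = "\<bar>TF adj v\<bar> + 2 * real k + 8 * (real k)\<^sup>2"
  obtain Gs :: "nat \<Rightarrow> 'a set" where Gs: "\<forall>m. finite (Gs m) \<and> Gs m \<subseteq> Gs (Suc m)"
    and cover: "(\<Union>m. Gs m) = UNIV"
    and lim: "(\<lambda>m. real (card (boundary adj (Gs m))) / real (card (Gs m))) \<longlonglongrightarrow> 0"
    using assms(5) unfolding smallish_def by blast
  have est: "\<bar>?T - 2 * real k\<bar> \<le> \<delta> * ?M" if dpos: "\<delta> > 0" for \<delta>
  proof -
    obtain m0 where m0: "v \<in> Gs m0" using cover by blast
    obtain no where no: "\<forall>n\<ge>no. norm (real (card (boundary adj (Gs n))) / real (card (Gs n)) - 0) < \<delta>"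
      using LIMSEQ_D[OF lim dpos] by blast
    define m where "m = max m0 no"
    have "Gs m0 \<le> Gs m" using lift_Suc_mono_le[of Gs m0 m] Gs unfolding m_def by auto
    then have vG: "v \<in> Gs m" using m0 by auto
    have finG: "finite (Gs m)" using Gs by auto
    have neG: "Gs m \<noteq> {}" using vG by auto
    have Gpos: "real (card (Gs m)) > 0" using finG neG by (simp add: card_gt_0_iff)
    have "real (card (boundary adj (Gs m))) / real (card (Gs m)) < \<delta>"
      using no[rule_format, of m] unfolding m_def by simp
    then have d: "real (card (boundary adj (Gs m))) \<le> \<delta> * real (card (Gs m))"
      using Gpos by (simp add: divide_less_eq)
    show ?thesis by (rule key_estimate[OF sym irr finN regk assms(4) assms(3) assms(2) finG neG d dpos])
  qed
  have T: "?T = 2 * real k"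
  proof (rule ccontr)
    assume ne: "?T \<noteq> 2 * real k"
    define e where "e = \<bar>?T - 2 * real k\<bar>"
    have epos: "e > 0" unfolding e_def using ne by simp
    have M0: "?M \<ge> 0" by simp
    define \<delta> where "\<delta> = e / (2 * (?M + 1))"
    have M1': "?M + 1 > 0" using M0 by linarith
    have M1: "2 * (?M + 1) > 0" using M1' by (intro mult_pos_pos) auto
    have dpos: "\<delta> > 0" unfolding \<delta>_def using epos M1 by (rule divide_pos_pos)
    have "e \<le> \<delta> * ?M" using est[OF dpos] unfolding e_def .
    also have "\<delta> * ?M < e"
    proof -
      have "\<delta> * ?M = e * (?M / (2 * (?M + 1)))" unfolding \<delta>_def by simp
      also have "?M / (2 * (?M + 1)) < 1"
      proof -
        have eq2: "2 * (?M + 1) = ?M + (?M + 2)" by (simp add: algebra_simps)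
        have "?M < 2 * (?M + 1)" unfolding eq2 using M0 by linarith
        then show ?thesis using M1 by (simp add: divide_less_eq_1_pos)
      qed
      then have "e * (?M / (2 * (?M + 1))) < e * 1" using epos by (intro mult_strict_left_mono) auto
      finally show ?thesis by simp
    qed
    finally show False by simp
  qed
  then show ?thesis unfolding TF_def by simp
qed



end
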